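(* Let $\mathbb{K}$ be a field of characteristic $2$, let $(A,\cdot,\{-,-\},(-)^{\{2\}})$ be a unital restricted Poisson algebra, let $k\ge2$ and let $(\varphi,\omega)\in C^k_{\rm PA}(A)$. Let $\hat\varphi:\Omega^k(A)\to A$ be the unique $A$-linear map with $\hat\varphi(x\,\mathrm{d}u_1\wedge\cdots\wedge\mathrm{d}u_k)=x\varphi(u_1,\dots,u_k)$. Then there exists a unique map $\hat\omega:\Omega^1(A)\times\Omega^{k-2}(A)\to A$ such that $(\hat\varphi,\hat\omega)\in C^k_{\rm LR}(\Omega^1(A);A)$ and $\hat\omega(\mathrm{d}u,\mathrm{d}v_2\wedge\cdots\wedge\mathrm{d}v_{k-1})=\omega(u,v_2,\dots,v_{k-1})$ for all $u,v_2,\dots,v_{k-1}\in A$.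
   Context: $\mathbb{K}$ has characteristic $2$. Restricted Poisson algebra: commutative associative $(A,\cdot)$ (here with unit) with Lie bracket satisfying $\{ab,c\}=a\{b,c\}+b\{a,c\}$ and a map $(-)^{\{2\}}$ making $(A,\{,\})$ restricted ($(\lambda x)^{\{2\}}=\lambda^2x^{\{2\}}$, $\mathrm{ad}_{x^{\{2\}}}=\mathrm{ad}_x^2$, $(x+y)^{\{2\}}=x^{\{2\}}+y^{\{2\}}+\{x,y\}$), with $(xy)^{\{2\}}=x^2y^{\{2\}}+y^2x^{\{2\}}+xy\{x,y\}$. $\mathfrak{X}^k(A)$: alternating $k$-linear maps $A^k\to A$ that are derivations of $\cdot$ in each argument. $C^k_{\rm PA}(A)$ ($k\ge2$): pairs $(\varphi,\omega)$ with $\varphi\in\mathfrak{X}^k(A)$ and $\omega:A\times A^{k-2}\to A$ alternating multilinear in the last $k-2$ arguments, such that for $z=(z_2,..,z_{k-1})$: $\omega(\lambda x,z)=\lambda^2\omega(x,z)$, $\omega(x+y,z)=\omega(x,z)+\omega(y,z)+\varphi(x,y,z)$, $\omega(xy,z)=x^2\omega(y,z)+y^2\omega(x,z)+xy\varphi(x,y,z)$, $\omega(x,..,z_iz_i',..)=z_i\omega(x,..,z_i',..)+z_i'\omega(x,..,z_i,..)$. $\Omega^1(A)$: Kähler differentials ($A$-module generated by $\mathrm{d}x$ modulo $\mathrm{d}(xy)-x\mathrm{d}y-y\mathrm{d}x$, $\mathrm{d}(x+y)-\mathrm{d}x-\mathrm{d}y$, $\mathrm{d}\lambda$); $\Omega^k(A)=\wedge^k_A\Omega^1(A)$,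 $\Omega^0(A)=A$. $C^k_{\rm LR}(\Omega^1(A);A)$ ($k\ge2$): pairs $(\Phi,W)$ with $\Phi:\Omega^1(A)^k\to A$ alternating and $A$-multilinear (equivalently $A$-linear on $\Omega^k(A)$) and $W:\Omega^1(A)\times\Omega^1(A)^{k-2}\to A$ alternating and $A$-multilinear in its last $k-2$ arguments (so it may be viewed on $\Omega^1(A)\times\Omega^{k-2}(A)$), with $W(\lambda\alpha,\beta)=\lambda^2W(\alpha,\beta)$ ($\lambda\in\mathbb{K}$), $W(a\alpha,\beta)=a^2W(\alpha,\beta)$ ($a\in A$), and $W(\alpha+\alpha',\beta)=W(\alpha,\beta)+W(\alpha',\beta)+\Phi(\alpha,\alpha',\beta)$. *)

theory Defs
  imports Complex_Main
begin

definition unital_K_algebra :: "('k::field \<Rightarrow> 'a::comm_ring_1 \<Rightarrow> 'a) \<Rightarrow> bool" where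
  "unital_K_algebra scale \<longleftrightarrow>
     vector_space scale \<and> (\<forall>c a b. scale c (a * b) = scale c a * b)"

definition restricted_poisson ::
  "('k::field \<Rightarrow> 'a::comm_ring_1 \<Rightarrow> 'a) \<Rightarrow> ('a \<Rightarrow> 'a \<Rightarrow> 'a) \<Rightarrow> ('a \<Rightarrow> 'a) \<Rightarrow> bool" where
  "restricted_poisson scale br p2 \<longleftrightarrow>
     unital_K_algebra scale \<and>
     \<comment> \<open>K-bilinear Lie bracket\<close>
     (\<forall>x y z. br (x + y) z = br x z + br y z) \<and>
     (\<forall>x y z. br x (y + z) = br x y + br x z) \<and>
     (\<forall>c x y. br (scale c x) y = scale c (br x y)) \<and>
     (\<forall>c x y. br x (scale c y) = scale c (br x y)) \<and>
     (\<forall>x. br x x = 0) \<and>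
     (\<forall>x y z. br x (br y z) + br y (br z x) + br z (br x y) = 0) \<and>
     \<comment> \<open>Leibniz rule\<close>
     (\<forall>a b c. br (a * b) c = a * br b c + b * br a c) \<and>
     \<comment> \<open>restricted (2-map) structure\<close>
     (\<forall>c x. p2 (scale c x) = scale (c ^ 2) (p2 x)) \<and>
     (\<forall>x y. br (p2 x) y = br x (br x y)) \<and>
     (\<forall>x y. p2 (x + y) = p2 x + p2 y + br x y) \<and>
     \<comment> \<open>compatibility of the 2-map with the product\<close>
     (\<forall>x y. p2 (x * y) = x ^ 2 * p2 y + y ^ 2 * p2 x + x * y * br x y)"

text \<open>k-ary maps are represented as functions on lists; only lists of the
relevant length matter.\<close>

definition multider :: "('k::field \<Rightarrow> 'a::comm_ring_1 \<Rightarrow> 'a) \<Rightarrow> nat \<Rightarrow> ('a list \<Rightarrow> 'a) \<Rightarrow> bool" where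
  "multider scale k \<phi> \<longleftrightarrow>
     (\<forall>xs i x y. length xs = k \<longrightarrow> i < k \<longrightarrow>
        \<phi> (xs[i := x + y]) = \<phi> (xs[i := x]) + \<phi> (xs[i := y])) \<and>
     (\<forall>xs i c x. length xs = k \<longrightarrow> i < k \<longrightarrow>
        \<phi> (xs[i := scale c x]) = scale c (\<phi> (xs[i := x]))) \<and>
     (\<forall>xs i j. length xs = k \<longrightarrow> i < j \<longrightarrow> j < k \<longrightarrow> xs ! i = xs ! j \<longrightarrow> \<phi> xs = 0) \<and>
     (\<forall>xs i x y. length xs = k \<longrightarrow> i < k \<longrightarrow>
        \<phi> (xs[i := x * y]) = x * \<phi> (xs[i := y]) + y * \<phi> (xs[i := x]))"

definition C_PA ::
  "('k::field \<Rightarrow> 'a::comm_ring_1 \<Rightarrow> 'a) \<Rightarrow> nat \<Rightarrow> ('a list \<Rightarrow> 'a) \<Rightarrow> ('a \<Rightarrow> 'a list \<Rightarrow> 'a) \<Rightarrow> bool" where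
  "C_PA scale k \<phi> \<omega> \<longleftrightarrow>
     multider scale k \<phi> \<and>
     \<comment> \<open>alternating and K-multilinear in the last k-2 arguments\<close>
     (\<forall>x zs i u v. length zs = k - 2 \<longrightarrow> i < k - 2 \<longrightarrow>
        \<omega> x (zs[i := u + v]) = \<omega> x (zs[i := u]) + \<omega> x (zs[i := v])) \<and>
     (\<forall>x zs i c u. length zs = k - 2 \<longrightarrow> i < k - 2 \<longrightarrow>
        \<omega> x (zs[i := scale c u]) = scale c (\<omega> x (zs[i := u]))) \<and>
     (\<forall>x zs i j. length zs = k - 2 \<longrightarrow> i < j \<longrightarrow> j < k - 2 \<longrightarrow> zs ! i = zs ! j \<longrightarrow> \<omega> x zs = 0) \<and>
     \<comment> \<open>conditions in the first argument\<close>
     (\<forall>c x zs. length zs = k - 2 \<longrightarrow> \<omega> (scale c x) zs = scale (c ^ 2) (\<omega> x zs)) \<and>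
     (\<forall>x y zs. length zs = k - 2 \<longrightarrow> \<omega> (x + y) zs = \<omega> x zs + \<omega> y zs + \<phi> (x # y # zs)) \<and>
     (\<forall>x y zs. length zs = k - 2 \<longrightarrow>
        \<omega> (x * y) zs = x ^ 2 * \<omega> y zs + y ^ 2 * \<omega> x zs + x * y * \<phi> (x # y # zs)) \<and>
     \<comment> \<open>derivation in each of the last k-2 arguments\<close>
     (\<forall>x zs i u v. length zs = k - 2 \<longrightarrow> i < k - 2 \<longrightarrow>
        \<omega> x (zs[i := u * v]) = u * \<omega> x (zs[i := v]) + v * \<omega> x (zs[i := u]))"

text \<open>Omega^1(A) is the quotient of the free A-module on the symbols du (u in A),
modelled as finitely supported functions 'a => 'a (f u = coefficient of du),
by the submodule generated by d(xy) - x dy - y dx, d(x+y) - dx - dy and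
d(lambda 1).  Maps defined on Omega^1(A) are represented by maps on the free
module that are invariant under the quotient relation.\<close>

definition free_mod :: "('a \<Rightarrow> 'a::zero) set" where
  "free_mod = {f. finite {u. f u \<noteq> 0}}"

definition dgen :: "'a \<Rightarrow> 'a \<Rightarrow> 'a::{zero,one}" where
  "dgen u = (\<lambda>v. if v = u then 1 else 0)"

definition fadd :: "('a \<Rightarrow> 'a::plus) \<Rightarrow> ('a \<Rightarrow> 'a) \<Rightarrow> 'a \<Rightarrow> 'a" where
  "fadd f g = (\<lambda>v. f v + g v)"

definition fsub :: "('a \<Rightarrow> 'a::minus) \<Rightarrow> ('a \<Rightarrow> 'a) \<Rightarrow> 'a \<Rightarrow> 'a" where
  "fsub f g = (\<lambda>v. f v - g v)"

definition amul :: "'a::times \<Rightarrow> ('a \<Rightarrow> 'a) \<Rightarrow> 'a \<Rightarrow> 'a" where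
  "amul a f = (\<lambda>v. a * f v)"

definition kmul :: "('k \<Rightarrow> 'a \<Rightarrow> 'a) \<Rightarrow> 'k \<Rightarrow> ('a \<Rightarrow> 'a) \<Rightarrow> 'a \<Rightarrow> 'a" where
  "kmul scale c f = (\<lambda>v. scale c (f v))"

inductive_set kaehler_rel :: "('k \<Rightarrow> 'a::comm_ring_1 \<Rightarrow> 'a) \<Rightarrow> ('a \<Rightarrow> 'a) set"
  for scale :: "'k \<Rightarrow> 'a::comm_ring_1 \<Rightarrow> 'a" where
  zero: "(\<lambda>_. 0) \<in> kaehler_rel scale"
| mult: "fsub (fsub (dgen (x * y)) (amul x (dgen y))) (amul y (dgen x)) \<in> kaehler_rel scale"
| add: "fsub (fsub (dgen (x + y)) (dgen x)) (dgen y) \<in> kaehler_rel scale"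
| const: "dgen (scale c 1) \<in> kaehler_rel scale"
| sum: "f \<in> kaehler_rel scale \<Longrightarrow> g \<in> kaehler_rel scale \<Longrightarrow> fadd f g \<in> kaehler_rel scale"
| smul: "f \<in> kaehler_rel scale \<Longrightarrow> amul a f \<in> kaehler_rel scale"

definition kaehler_eq :: "('k \<Rightarrow> 'a::comm_ring_1 \<Rightarrow> 'a) \<Rightarrow> ('a \<Rightarrow> 'a) \<Rightarrow> ('a \<Rightarrow> 'a) \<Rightarrow> bool" where
  "kaehler_eq scale f g \<longleftrightarrow> fsub f g \<in> kaehler_rel scale"

definition lr_phi :: "('k::field \<Rightarrow> 'a::comm_ring_1 \<Rightarrow> 'a) \<Rightarrow> nat \<Rightarrow> (('a \<Rightarrow> 'a) list \<Rightarrow> 'a) \<Rightarrow> bool" where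
  "lr_phi scale k \<Phi> \<longleftrightarrow>
     (\<forall>as bs. length as = k \<longrightarrow> set as \<subseteq> free_mod \<longrightarrow> set bs \<subseteq> free_mod \<longrightarrow>
        list_all2 (kaehler_eq scale) as bs \<longrightarrow> \<Phi> as = \<Phi> bs) \<and>
     (\<forall>as i \<alpha> \<beta>. length as = k \<longrightarrow> set as \<subseteq> free_mod \<longrightarrow> i < k \<longrightarrow>
        \<alpha> \<in> free_mod \<longrightarrow> \<beta> \<in> free_mod \<longrightarrow>
        \<Phi> (as[i := fadd \<alpha> \<beta>]) = \<Phi> (as[i := \<alpha>]) + \<Phi> (as[i := \<beta>])) \<and>
     (\<forall>as i a \<alpha>. length as = k \<longrightarrow> set as \<subseteq> free_mod \<longrightarrow> i < k \<longrightarrow> \<alpha> \<in> free_mod \<longrightarrow>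
        \<Phi> (as[i := amul a \<alpha>]) = a * \<Phi> (as[i := \<alpha>])) \<and>
     (\<forall>as i j. length as = k \<longrightarrow> set as \<subseteq> free_mod \<longrightarrow> i < j \<longrightarrow> j < k \<longrightarrow>
        as ! i = as ! j \<longrightarrow> \<Phi> as = 0)"

definition C_LR ::
  "('k::field \<Rightarrow> 'a::comm_ring_1 \<Rightarrow> 'a) \<Rightarrow> nat \<Rightarrow> (('a \<Rightarrow> 'a) list \<Rightarrow> 'a)
     \<Rightarrow> (('a \<Rightarrow> 'a) \<Rightarrow> ('a \<Rightarrow> 'a) list \<Rightarrow> 'a) \<Rightarrow> bool" where
  "C_LR scale k \<Phi> W \<longleftrightarrow>
     lr_phi scale k \<Phi> \<and>
     \<comment> \<open>W is well defined on Omega^1(A) x Omega^1(A)^(k-2)\<close>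
     (\<forall>\<alpha> \<alpha>' bs bs'. \<alpha> \<in> free_mod \<longrightarrow> \<alpha>' \<in> free_mod \<longrightarrow> length bs = k - 2 \<longrightarrow>
        set bs \<subseteq> free_mod \<longrightarrow> set bs' \<subseteq> free_mod \<longrightarrow>
        kaehler_eq scale \<alpha> \<alpha>' \<longrightarrow> list_all2 (kaehler_eq scale) bs bs' \<longrightarrow>
        W \<alpha> bs = W \<alpha>' bs') \<and>
     \<comment> \<open>alternating and A-multilinear in the last k-2 arguments\<close>
     (\<forall>\<alpha> bs i \<beta> \<gamma>. \<alpha> \<in> free_mod \<longrightarrow> length bs = k - 2 \<longrightarrow> set bs \<subseteq> free_mod \<longrightarrow> i < k - 2 \<longrightarrow>
        \<beta> \<in> free_mod \<longrightarrow> \<gamma> \<in> free_mod \<longrightarrow>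
        W \<alpha> (bs[i := fadd \<beta> \<gamma>]) = W \<alpha> (bs[i := \<beta>]) + W \<alpha> (bs[i := \<gamma>])) \<and>
     (\<forall>\<alpha> bs i a \<beta>. \<alpha> \<in> free_mod \<longrightarrow> length bs = k - 2 \<longrightarrow> set bs \<subseteq> free_mod \<longrightarrow> i < k - 2 \<longrightarrow>
        \<beta> \<in> free_mod \<longrightarrow> W \<alpha> (bs[i := amul a \<beta>]) = a * W \<alpha> (bs[i := \<beta>])) \<and>
     (\<forall>\<alpha> bs i j. \<alpha> \<in> free_mod \<longrightarrow> length bs = k - 2 \<longrightarrow> set bs \<subseteq> free_mod \<longrightarrow>
        i < j \<longrightarrow> j < k - 2 \<longrightarrow> bs ! i = bs ! j \<longrightarrow> W \<alpha> bs = 0) \<and>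
     \<comment> \<open>conditions in the first argument\<close>
     (\<forall>c \<alpha> bs. \<alpha> \<in> free_mod \<longrightarrow> length bs = k - 2 \<longrightarrow> set bs \<subseteq> free_mod \<longrightarrow>
        W (kmul scale c \<alpha>) bs = scale (c ^ 2) (W \<alpha> bs)) \<and>
     (\<forall>a \<alpha> bs. \<alpha> \<in> free_mod \<longrightarrow> length bs = k - 2 \<longrightarrow> set bs \<subseteq> free_mod \<longrightarrow>
        W (amul a \<alpha>) bs = a ^ 2 * W \<alpha> bs) \<and>
     (\<forall>\<alpha> \<alpha>' bs. \<alpha> \<in> free_mod \<longrightarrow> \<alpha>' \<in> free_mod \<longrightarrow> length bs = k - 2 \<longrightarrow> set bs \<subseteq> free_mod \<longrightarrow>
        W (fadd \<alpha> \<alpha>') bs = W \<alpha> bs + W \<alpha>' bs + \<Phi> (\<alpha> # \<alpha>' # bs))"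

end

theory Submission
  imports Defs
begin


definition fsupp :: "('a \<Rightarrow> 'a::zero) \<Rightarrow> 'a set" where
  "fsupp f = {u. f u \<noteq> 0}"

lemma free_mod_iff: "f \<in> free_mod \<longleftrightarrow> finite (fsupp f)"
  by (simp add: free_mod_def fsupp_def)

lemma triv1: "(1::'a::comm_ring_1) = 0 \<Longrightarrow> (x::'a) = y"
  by (metis mult.right_neutral mult_zero_right)

lemma fsupp_dgen: "fsupp (dgen u :: 'a \<Rightarrow> 'a::comm_ring_1) \<subseteq> {u}"
  by (auto simp: fsupp_def dgen_def split: if_splits)

lemma fsupp_dgen1: "(1::'a::comm_ring_1) \<noteq> 0 \<Longrightarrow> fsupp (dgen u :: 'a \<Rightarrow> 'a) = {u}"
  by (auto simp: fsupp_def dgen_def split: if_splits)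

lemma dgen_free: "(dgen u :: 'a \<Rightarrow> 'a::comm_ring_1) \<in> free_mod"
  unfolding free_mod_iff by (rule finite_subset[OF fsupp_dgen]) simp

lemma fsupp_fadd: "fsupp (fadd f g) \<subseteq> fsupp f \<union> fsupp (g::'a\<Rightarrow>'a::comm_ring_1)"
  by (auto simp: fsupp_def fadd_def)

lemma fsupp_amul: "fsupp (amul a f) \<subseteq> fsupp (f::'a\<Rightarrow>'a::comm_ring_1)"
  by (auto simp: fsupp_def amul_def)

lemma fsupp_fsub: "fsupp (fsub f g) \<subseteq> fsupp f \<union> fsupp (g::'a\<Rightarrow>'a::comm_ring_1)"
  by (auto simp: fsupp_def fsub_def)

lemma fadd_free: "f \<in> free_mod \<Longrightarrow> g \<in> free_mod \<Longrightarrow> fadd f (g::'a\<Rightarrow>'a::comm_ring_1) \<in> free_mod"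
  unfolding free_mod_iff by (rule finite_subset[OF fsupp_fadd]) simp

lemma amul_free: "f \<in> free_mod \<Longrightarrow> amul a (f::'a\<Rightarrow>'a::comm_ring_1) \<in> free_mod"
  unfolding free_mod_iff by (rule finite_subset[OF fsupp_amul])

lemma fsub_free: "f \<in> free_mod \<Longrightarrow> g \<in> free_mod \<Longrightarrow> fsub f (g::'a\<Rightarrow>'a::comm_ring_1) \<in> free_mod"
  unfolding free_mod_iff by (rule finite_subset[OF fsupp_fsub]) simp

lemma zero_free: "(\<lambda>_. 0::'a::comm_ring_1) \<in> free_mod"
  by (simp add: free_mod_def)

lemma rel_free: "r \<in> kaehler_rel scale \<Longrightarrow> r \<in> free_mod"
  by (induction rule: kaehler_rel.induct)
     (auto intro!: fsub_free fadd_free amul_free dgen_free zero_free)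

lemma fsub_eq: "fsub f g = fadd f (amul (-1) (g::'a\<Rightarrow>'a::comm_ring_1))"
  by (auto simp: fsub_def fadd_def amul_def)

lemma zero_amul: "(\<lambda>_. 0::'a::comm_ring_1) = amul 0 (\<lambda>_. 0)"
  by (simp add: amul_def)

lemma fadd_fsub: "fadd g (fsub f g) = (f::'a\<Rightarrow>'a::comm_ring_1)"
  by (auto simp: fsub_def fadd_def)

lemma split_point: "f = fadd (amul (f t) (dgen t)) (f(t := 0::'a::comm_ring_1))"
  by (auto simp: fadd_def amul_def dgen_def)

lemma keq_refl: "f \<in> free_mod \<Longrightarrow> kaehler_eq scale f f"
proof -
  have "fsub f f = (\<lambda>_. 0)" by (simp add: fsub_def)
  then show ?thesis unfolding kaehler_eq_def by (simp add: kaehler_rel.zero)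
qed

section \<open>Multilinear extension\<close>

fun mext :: "('a::comm_ring_1 list \<Rightarrow> 'a) \<Rightarrow> ('a \<Rightarrow> 'a) list \<Rightarrow> 'a" where
  "mext \<psi> [] = \<psi> []"
| "mext \<psi> (b # bs) = (\<Sum>v\<in>fsupp b. b v * mext (\<lambda>vs. \<psi> (v # vs)) bs)"

lemma sum_sup:
  assumes "finite T" "fsupp b \<subseteq> T"
  shows "(\<Sum>v\<in>fsupp b. b v * g v) = (\<Sum>v\<in>T. (b v :: 'a::comm_ring_1) * g v)"
  by (rule sum.mono_neutral_left) (use assms in \<open>auto simp: fsupp_def\<close>)

lemma mext_cons_sup:
  "finite T \<Longrightarrow> fsupp b \<subseteq> T \<Longrightarrow>
   mext \<psi> (b # bs) = (\<Sum>v\<in>T. b v * mext (\<lambda>vs. \<psi> (v # vs)) bs)"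
  by (simp add: sum_sup)

lemma mext_add:
  "i < length bs \<Longrightarrow> b \<in> free_mod \<Longrightarrow> c \<in> free_mod \<Longrightarrow>
   mext \<psi> (bs[i := fadd b c]) = mext \<psi> (bs[i := b]) + mext \<psi> (bs[i := c])"
proof (induction bs arbitrary: \<psi> i)
  case Nil
  then show ?case by simp
next
  case (Cons b0 bs)
  show ?case
  proof (cases i)
    case 0
    let ?T = "fsupp b \<union> fsupp c"
    have fT: "finite ?T" using Cons.prems by (simp add: free_mod_iff)
    have "mext \<psi> ((b0 # bs)[i := fadd b c]) = (\<Sum>v\<in>?T. fadd b c v * mext (\<lambda>vs. \<psi> (v # vs)) bs)"
      using 0 mext_cons_sup[OF fT fsupp_fadd] by simp
    also have "\<dots> = (\<Sum>v\<in>?T. b v * mext (\<lambda>vs. \<psi> (v # vs)) bs) + (\<Sum>v\<in>?T. c v * mext (\<lambda>vs. \<psi> (v # vs)) bs)"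
      by (simp add: fadd_def distrib_right sum.distrib)
    also have "\<dots> = mext \<psi> ((b0 # bs)[i := b]) + mext \<psi> ((b0 # bs)[i := c])"
      using 0 mext_cons_sup[OF fT, of b \<psi> bs] mext_cons_sup[OF fT, of c \<psi> bs] by simp
    finally show ?thesis .
  next
    case (Suc j)
    then show ?thesis using Cons
      by (simp add: distrib_left sum.distrib)
  qed
qed

lemma mext_amul:
  "i < length bs \<Longrightarrow> b \<in> free_mod \<Longrightarrow>
   mext \<psi> (bs[i := amul a b]) = a * mext \<psi> (bs[i := b])"
proof (induction bs arbitrary: \<psi> i)
  case Nil
  then show ?case by simp
next
  case (Cons b0 bs)
  show ?case
  proof (cases i)
    case 0
    let ?T = "fsupp b"
    have fT: "finite ?T" using Cons.prems by (simp add: free_mod_iff)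
    have "mext \<psi> ((b0 # bs)[i := amul a b]) = (\<Sum>v\<in>?T. amul a b v * mext (\<lambda>vs. \<psi> (v # vs)) bs)"
      using 0 mext_cons_sup[OF fT fsupp_amul] by simp
    also have "\<dots> = a * (\<Sum>v\<in>?T. b v * mext (\<lambda>vs. \<psi> (v # vs)) bs)"
      by (simp add: amul_def sum_distrib_left mult.assoc)
    also have "\<dots> = a * mext \<psi> ((b0 # bs)[i := b])"
      using 0 by simp
    finally show ?thesis .
  next
    case (Suc j)
    then show ?thesis using Cons
      by (simp add: sum_distrib_left mult.left_commute)
  qed
qed

lemma mext_cong:
  "(\<And>vs. length vs = length bs \<Longrightarrow> \<psi> vs = \<psi>' vs) \<Longrightarrow> mext \<psi> bs = mext \<psi>' bs"
proof (induction bs arbitrary: \<psi> \<psi>')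
  case Nil
  then show ?case by simp
next
  case (Cons b bs)
  show ?case by simp (rule sum.cong, simp, rule arg_cong[where f="(*) _"], rule Cons.IH, simp add: Cons.prems)
qed

lemma mext_plus_fun: "mext (\<lambda>vs. f vs + g vs) bs = mext f bs + mext g bs"
  by (induction bs arbitrary: f g) (simp_all add: distrib_left sum.distrib)

lemma mext_times_fun: "mext (\<lambda>vs. a * f vs) bs = a * mext f bs"
  by (induction bs arbitrary: f) (simp_all add: sum_distrib_left mult.left_commute)

lemma mext_zero_fun: "mext (\<lambda>vs. 0) bs = 0"
  using mext_times_fun[of 0 "\<lambda>_. 0" bs] by simp

lemma mext_uminus_fun: "mext (\<lambda>vs. - f vs) bs = - mext f bs"
  using mext_times_fun[of "-1" f bs] by simp

lemma mext_minus_fun: "mext (\<lambda>vs. f vs - g vs) bs = mext f bs - mext g bs"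
  using mext_plus_fun[of f "\<lambda>vs. - g vs" bs] by (simp add: mext_uminus_fun)

lemma mext_dgen_cons: "mext \<psi> (dgen u # bs) = mext (\<lambda>vs. \<psi> (u # vs)) bs"
proof (cases "(1::'a) = 0")
  case True
  then show ?thesis by (rule triv1)
next
  case False
  then show ?thesis by (simp add: fsupp_dgen1) (simp add: dgen_def)
qed

lemma mext_map_dgen: "mext \<psi> (map dgen vs) = \<psi> vs"
proof (induction vs arbitrary: \<psi>)
  case Nil
  then show ?case by simp
next
  case (Cons a vs)
  have "mext \<psi> (map dgen (a # vs)) = mext (\<lambda>vs. \<psi> (a # vs)) (map dgen vs)"
    using mext_dgen_cons[of \<psi> a "map dgen vs"] by simp
  then show ?case using Cons.IH by simp
qed

lemma mext_upd_dgen: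
  "i < length bs \<Longrightarrow> mext \<psi> (bs[i := dgen u]) = mext (\<lambda>vs. \<psi> (vs[i := u])) (bs[i := dgen z])"
proof (induction bs arbitrary: \<psi> i)
  case Nil
  then show ?case by simp
next
  case (Cons b bs)
  show ?case
  proof (cases i)
    case 0
    have "mext \<psi> ((b # bs)[i := dgen u]) = mext (\<lambda>vs. \<psi> (u # vs)) bs"
      using 0 mext_dgen_cons[of \<psi> u bs] by simp
    moreover have "mext (\<lambda>vs. \<psi> (vs[i := u])) ((b # bs)[i := dgen z]) = mext (\<lambda>vs. \<psi> (u # vs)) bs"
      using 0 mext_dgen_cons[of "\<lambda>vs. \<psi> (vs[0 := u])" z bs] by simp
    ultimately show ?thesis by simp
  next
    case (Suc j)
    then show ?thesis using Cons by simp
  qed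
qed




lemma lin_expand:
  assumes add: "\<And>b c. b \<in> free_mod \<Longrightarrow> c \<in> free_mod \<Longrightarrow> G (fadd b c) = G b + G c"
    and mul: "\<And>a b. b \<in> free_mod \<Longrightarrow> G (amul a b) = a * G b"
    and fin: "finite T" and sub: "fsupp b \<subseteq> T"
  shows "G b = (\<Sum>w\<in>T. b w * G (dgen w :: 'a \<Rightarrow> 'a::comm_ring_1))"
  using fin sub
proof (induction T arbitrary: b rule: finite_induct)
  case empty
  then have "b = (\<lambda>_. 0)" by (auto simp: fsupp_def)
  then show ?case using mul[OF zero_free, of 0] by (simp add: zero_amul[symmetric])
next
  case (insert t T)
  define b' where "b' = b(t := 0)"
  have sb': "fsupp b' \<subseteq> T" using insert.prems by (auto simp: fsupp_def b'_def)
  have fb': "b' \<in> free_mod" using sb' insert.hyps(1) by (simp add: free_mod_iff finite_subset)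
  have eq: "b = fadd (amul (b t) (dgen t)) b'" unfolding b'_def by (rule split_point)
  have "G b = G (fadd (amul (b t) (dgen t)) b')" by (rule arg_cong[OF eq])
  also have "\<dots> = G (amul (b t) (dgen t)) + G b'" by (rule add[OF amul_free[OF dgen_free] fb'])
  also have "G (amul (b t) (dgen t)) = b t * G (dgen t)" by (rule mul[OF dgen_free])
  finally have "G b = b t * G (dgen t) + G b'" .
  also have "G b' = (\<Sum>w\<in>T. b' w * G (dgen w))" using insert.IH[OF sb'] .
  also have "\<dots> = (\<Sum>w\<in>T. b w * G (dgen w))"
    using insert.hyps(2) by (intro sum.cong) (auto simp: b'_def)
  finally show ?case using insert.hyps by simp
qed

definition MLin :: "nat \<Rightarrow> (('a \<Rightarrow> 'a::comm_ring_1) list \<Rightarrow> 'a) \<Rightarrow> bool" where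
  "MLin n F \<longleftrightarrow>
    (\<forall>bs i (b::'a\<Rightarrow>'a) c. length bs = n \<longrightarrow> set bs \<subseteq> free_mod \<longrightarrow> i < n \<longrightarrow> b \<in> free_mod \<longrightarrow> c \<in> free_mod \<longrightarrow>
       F (bs[i := fadd b c]) = F (bs[i := b]) + F (bs[i := c])) \<and>
    (\<forall>bs i a (b::'a\<Rightarrow>'a). length bs = n \<longrightarrow> set bs \<subseteq> free_mod \<longrightarrow> i < n \<longrightarrow> b \<in> free_mod \<longrightarrow>
       F (bs[i := amul a b]) = a * F (bs[i := b]))"

lemma MLin_tail:
  fixes F :: "('a \<Rightarrow> 'a::comm_ring_1) list \<Rightarrow> 'a"
  assumes "MLin (Suc n) F" "w \<in> free_mod"
  shows "MLin n (\<lambda>cs. F (w # cs))"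
  unfolding MLin_def
proof (intro conjI allI impI)
  fix bs :: "('a \<Rightarrow> 'a) list" and i and b c :: "'a \<Rightarrow> 'a" assume h: "length bs = n" "set bs \<subseteq> free_mod" "i < n" "b \<in> free_mod" "c \<in> free_mod"
  show "F (w # bs[i := fadd b c]) = F (w # bs[i := b]) + F (w # bs[i := c])"
    using assms h unfolding MLin_def
    by (metis (no_types, lifting) Suc_less_eq insert_subset length_Cons list.set(2) list_update_code(3))
next
  fix bs :: "('a \<Rightarrow> 'a) list" and i a and b :: "'a \<Rightarrow> 'a" assume h: "length bs = n" "set bs \<subseteq> free_mod" "i < n" "b \<in> free_mod"
  show "F (w # bs[i := amul a b]) = a * F (w # bs[i := b])"
    using assms h unfolding MLin_def
    by (metis (no_types, lifting) Suc_less_eq insert_subset length_Cons list.set(2) list_update_code(3))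
qed

lemma MLin_expand:
  "MLin (length bs) F \<Longrightarrow> set bs \<subseteq> free_mod \<Longrightarrow> F bs = mext (\<lambda>vs. F (map dgen vs)) bs"
proof (induction bs arbitrary: F)
  case Nil
  then show ?case by simp
next
  case (Cons b bs)
  have fb: "b \<in> free_mod" and fbs: "set bs \<subseteq> free_mod" using Cons.prems by auto
  have "F (b # bs) = (\<Sum>w\<in>fsupp b. b w * F (dgen w # bs))"
  proof (rule lin_expand[where G = "\<lambda>c. F (c # bs)"])
    fix c d :: "'a \<Rightarrow> 'a" assume "c \<in> free_mod" "d \<in> free_mod"
    then show "F (fadd c d # bs) = F (c # bs) + F (d # bs)"
      using Cons.prems unfolding MLin_def
      by (metis length_greater_0_conv list.discI list_update_code(2))
  next
    fix a and c :: "'a \<Rightarrow> 'a" assume "c \<in> free_mod"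
    then show "F (amul a c # bs) = a * F (c # bs)"
      using Cons.prems unfolding MLin_def
      by (metis length_greater_0_conv list.discI list_update_code(2))
  qed (use fb in \<open>auto simp: free_mod_iff\<close>)
  also have "\<dots> = (\<Sum>w\<in>fsupp b. b w * mext (\<lambda>vs. F (dgen w # map dgen vs)) bs)"
  proof (rule sum.cong[OF refl])
    fix w
    have "MLin (length bs) (\<lambda>cs. F (dgen w # cs))"
      using MLin_tail[OF _ dgen_free, of "length bs" F w] Cons.prems by simp
    then show "b w * F (dgen w # bs) = b w * mext (\<lambda>vs. F (dgen w # map dgen vs)) bs"
      using Cons.IH[of "\<lambda>cs. F (dgen w # cs)"] fbs by simp
  qed
  also have "\<dots> = mext (\<lambda>vs. F (map dgen vs)) (b # bs)" by simp
  finally show ?case .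
qed

definition dslot :: "('k \<Rightarrow> 'a \<Rightarrow> 'a) \<Rightarrow> nat \<Rightarrow> ('a::comm_ring_1 list \<Rightarrow> 'a) \<Rightarrow> bool" where
  "dslot scale n \<psi> \<longleftrightarrow>
    (\<forall>xs i x y. length xs = n \<longrightarrow> i < n \<longrightarrow>
       \<psi> (xs[i := x + y]) = \<psi> (xs[i := x]) + \<psi> (xs[i := y]) \<and>
       \<psi> (xs[i := x * y]) = x * \<psi> (xs[i := y]) + y * \<psi> (xs[i := x])) \<and>
    (\<forall>xs i c. length xs = n \<longrightarrow> i < n \<longrightarrow> \<psi> (xs[i := scale c 1]) = 0)"

lemma dslot_tail: "dslot scale (Suc n) \<psi> \<Longrightarrow> dslot scale n (\<lambda>vs. \<psi> (v # vs))"
  unfolding dslot_def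
  by (metis Suc_less_eq length_Cons list_update_code(3))

definition altn :: "nat \<Rightarrow> ('a list \<Rightarrow> 'b::zero) \<Rightarrow> bool" where
  "altn n \<psi> \<longleftrightarrow> (\<forall>xs i j. length xs = n \<longrightarrow> i < j \<longrightarrow> j < n \<longrightarrow> xs ! i = xs ! j \<longrightarrow> \<psi> xs = 0)"

lemma altn_tail: "altn (Suc n) \<psi> \<Longrightarrow> altn n (\<lambda>vs. \<psi> (v # vs))"
  unfolding altn_def
  by (metis Suc_less_eq length_Cons nth_Cons_Suc)




lemma mext_key:
  "i < length bs \<Longrightarrow> mext \<psi> (bs[i := dgen u]) = mext (\<lambda>vs. \<psi> (vs[i := u])) (bs[i := dgen 0])"
  by (rule mext_upd_dgen)

lemma mext_rel:
  assumes "r \<in> kaehler_rel scale" "dslot scale (length bs) \<psi>" "i < length bs"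
  shows "mext \<psi> (bs[i := r]) = 0"
  using assms(1)
proof (induction rule: kaehler_rel.induct)
  case zero
  then show ?case using mext_amul[OF assms(3) zero_free, of \<psi> 0] by (simp add: zero_amul[symmetric])
next
  case (mult x y)
  let ?N = "\<lambda>\<chi>. mext \<chi> (bs[i := dgen 0])"
  have eq: "fsub (fsub (dgen (x * y)) (amul x (dgen y))) (amul y (dgen x)) =
        fadd (fadd (dgen (x * y)) (amul (-x) (dgen y))) (amul (-y) (dgen x))"
    by (auto simp: fsub_def fadd_def amul_def)
  have "mext \<psi> (bs[i := fadd (fadd (dgen (x * y)) (amul (-x) (dgen y))) (amul (-y) (dgen x))])
      = mext \<psi> (bs[i := dgen (x * y)]) + (-x) * mext \<psi> (bs[i := dgen y]) + (-y) * mext \<psi> (bs[i := dgen x])"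
    using assms(3)
    by (simp add: mext_add mext_amul fadd_free amul_free dgen_free)
  also have "\<dots> = ?N (\<lambda>vs. \<psi> (vs[i := x * y])) + (-x) * ?N (\<lambda>vs. \<psi> (vs[i := y])) + (-y) * ?N (\<lambda>vs. \<psi> (vs[i := x]))"
    by (simp only: mext_key[OF assms(3), of \<psi> "x * y"] mext_key[OF assms(3), of \<psi> y] mext_key[OF assms(3), of \<psi> x])
  also have "\<dots> = ?N (\<lambda>vs. \<psi> (vs[i := x * y]) + (-x) * \<psi> (vs[i := y]) + (-y) * \<psi> (vs[i := x]))"
    by (simp only: mext_plus_fun mext_times_fun)
  also have "\<dots> = ?N (\<lambda>vs. 0)"
    using assms(2,3) by (intro mext_cong) (simp add: dslot_def)
  also have "\<dots> = 0" by (rule mext_zero_fun)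
  finally show ?case by (simp add: eq)
next
  case (add x y)
  let ?N = "\<lambda>\<chi>. mext \<chi> (bs[i := dgen 0])"
  have eq: "fsub (fsub (dgen (x + y)) (dgen x)) (dgen y) =
        fadd (fadd (dgen (x + y)) (amul (-1) (dgen x))) (amul (-1) (dgen y))"
    by (auto simp: fsub_def fadd_def amul_def)
  have "mext \<psi> (bs[i := fadd (fadd (dgen (x + y)) (amul (-1) (dgen x))) (amul (-1) (dgen y))])
      = mext \<psi> (bs[i := dgen (x + y)]) + (-1) * mext \<psi> (bs[i := dgen x]) + (-1) * mext \<psi> (bs[i := dgen y])"
    using assms(3)
    by (simp add: mext_add mext_amul fadd_free amul_free dgen_free)
  also have "\<dots> = ?N (\<lambda>vs. \<psi> (vs[i := x + y])) + (-1) * ?N (\<lambda>vs. \<psi> (vs[i := x])) + (-1) * ?N (\<lambda>vs. \<psi> (vs[i := y]))"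
    by (simp only: mext_key[OF assms(3), of \<psi> "x + y"] mext_key[OF assms(3), of \<psi> y] mext_key[OF assms(3), of \<psi> x])
  also have "\<dots> = ?N (\<lambda>vs. \<psi> (vs[i := x + y]) + (-1) * \<psi> (vs[i := x]) + (-1) * \<psi> (vs[i := y]))"
    by (simp only: mext_plus_fun mext_times_fun)
  also have "\<dots> = ?N (\<lambda>vs. 0)"
    using assms(2,3) by (intro mext_cong) (simp add: dslot_def)
  also have "\<dots> = 0" by (rule mext_zero_fun)
  finally show ?case by (simp add: eq)
next
  case (const c)
  have "mext \<psi> (bs[i := dgen (scale c 1)]) = mext (\<lambda>vs. \<psi> (vs[i := scale c 1])) (bs[i := dgen 0])"
    using assms(3) by (rule mext_key)
  also have "\<dots> = mext (\<lambda>vs. 0) (bs[i := dgen 0])"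
    using assms(2,3) by (intro mext_cong) (simp add: dslot_def)
  finally show ?case by (simp add: mext_zero_fun)
next
  case (sum f g)
  then show ?case using assms(3) by (simp add: mext_add rel_free)
next
  case (smul f a)
  then show ?case using assms(3) by (simp add: mext_amul rel_free)
qed

lemma mext_slot_eq:
  assumes "dslot scale (length bs) \<psi>" "i < length bs" "b \<in> free_mod" "b' \<in> free_mod"
    "kaehler_eq scale b b'"
  shows "mext \<psi> (bs[i := b]) = mext \<psi> (bs[i := b'])"
proof -
  have r: "fsub b b' \<in> kaehler_rel scale" using assms(5) by (simp add: kaehler_eq_def)
  have "mext \<psi> (bs[i := b]) = mext \<psi> (bs[i := fadd b' (fsub b b')])" by (simp add: fadd_fsub)
  also have "\<dots> = mext \<psi> (bs[i := b']) + mext \<psi> (bs[i := fsub b b'])"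
    using assms by (simp add: mext_add fsub_free)
  also have "mext \<psi> (bs[i := fsub b b']) = 0" using mext_rel[OF r assms(1,2)] .
  finally show ?thesis by simp
qed

lemma mext_welldef:
  assumes "list_all2 (kaehler_eq scale) bs bs'" "set bs \<subseteq> free_mod" "set bs' \<subseteq> free_mod"
    "dslot scale (length bs) \<psi>"
  shows "mext \<psi> bs = mext \<psi> bs'"
  using assms
proof (induction bs bs' arbitrary: \<psi> rule: list_all2_induct)
  case Nil
  then show ?case by simp
next
  case (Cons b bs b' bs')
  have len: "length bs = length bs'" using Cons.hyps(2) by (rule list_all2_lengthD)
  have "mext \<psi> (b # bs) = mext \<psi> (b # bs')"
    using Cons.prems Cons.IH dslot_tail[of scale "length bs" \<psi>] by simp
  moreover have "mext \<psi> ((b # bs')[0 := b]) = mext \<psi> ((b # bs')[0 := b'])"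
    using Cons.prems Cons.hyps len
    by (intro mext_slot_eq[of scale _ \<psi>]) auto
  ultimately show ?case by simp
qed

lemma char2_eq: "(\<And>z::'a::comm_ring_1. z + z = 0) \<Longrightarrow> x + y = 0 \<Longrightarrow> x = (y::'a)"
  by (metis add.assoc add.right_neutral add_0)

lemma antisym_slot:
  assumes ds: "dslot scale n \<psi>" and al: "altn n \<psi>" and len: "length xs = n" and ij: "i < j" "j < n"
  shows "\<psi> (xs[i := x, j := y]) + \<psi> (xs[i := y, j := x]) = 0"
proof -
  define P where "P a b = \<psi> (xs[i := a, j := b])" for a b
  have addl: "P (a + a') b = P a b + P a' b" for a a' b
  proof -
    have "xs[i := c, j := b] = xs[j := b, i := c]" for c using ij by (simp add: list_update_swap)
    then show ?thesis using ds len ij unfolding P_def dslot_def by simp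
  qed
  have addr: "P a (b + b') = P a b + P a b'" for a b b'
    using ds len ij unfolding P_def dslot_def by simp
  have diag: "P a a = 0" for a
  proof -
    have "(xs[i := a, j := a]) ! i = (xs[i := a, j := a]) ! j" using len ij by simp
    then show ?thesis using al len ij unfolding P_def altn_def by simp
  qed
  have "0 = P (x + y) (x + y)" using diag by simp
  also have "\<dots> = P x x + P x y + (P y x + P y y)" by (simp add: addl addr)
  finally show ?thesis using diag unfolding P_def by simp
qed

lemma dsum_zero:
  assumes c2: "\<And>z::'a::comm_ring_1. z + z = 0" and fin: "finite T"
    and sym: "\<forall>v\<in>T. \<forall>w\<in>T. c v w = c w v" and dg: "\<forall>v\<in>T. c v v = 0"
  shows "(\<Sum>v\<in>T. \<Sum>w\<in>T. b v * b w * (c v w :: 'a)) = 0"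
  using fin sym dg
proof (induction T rule: finite_induct)
  case empty
  then show ?case by simp
next
  case (insert t T)
  let ?S = "\<Sum>w\<in>T. b t * b w * c t w"
  let ?D = "\<Sum>v\<in>T. \<Sum>w\<in>T. b v * b w * c v w"
  have sy: "c v t = c t v" if "v \<in> T" for v using insert.prems(1) that by blast
  have d0: "c t t = 0" using insert.prems(2) by blast
  have IH: "?D = 0"
  proof (rule insert.IH)
    show "\<forall>v\<in>T. \<forall>w\<in>T. c v w = c w v" using insert.prems(1) by blast
    show "\<forall>v\<in>T. c v v = 0" using insert.prems(2) by blast
  qed
  have inner: "(\<Sum>w\<in>insert t T. b v * b w * c v w) = b v * b t * c v t + (\<Sum>w\<in>T. b v * b w * c v w)" for v
    using insert.hyps by (rule sum.insert)
  have "(\<Sum>v\<in>insert t T. \<Sum>w\<in>insert t T. b v * b w * c v w)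
      = (\<Sum>w\<in>insert t T. b t * b w * c t w) + (\<Sum>v\<in>T. \<Sum>w\<in>insert t T. b v * b w * c v w)"
    using insert.hyps by (rule sum.insert)
  also have "(\<Sum>w\<in>insert t T. b t * b w * c t w) = b t * b t * c t t + ?S"
    by (rule inner)
  also have "(\<Sum>v\<in>T. \<Sum>w\<in>insert t T. b v * b w * c v w) = (\<Sum>v\<in>T. b v * b t * c v t + (\<Sum>w\<in>T. b v * b w * c v w))"
    by (rule sum.cong[OF refl], rule inner)
  also have "\<dots> = (\<Sum>v\<in>T. b v * b t * c v t) + ?D"
    by (rule sum.distrib)
  also have "(\<Sum>v\<in>T. b v * b t * c v t) = ?S"
  proof (rule sum.cong[OF refl])
    fix v assume "v \<in> T"
    then show "b v * b t * c v t = b t * b v * c t v" using sy[of v] by (simp add: mult.commute)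
  qed
  finally have "(\<Sum>v\<in>insert t T. \<Sum>w\<in>insert t T. b v * b w * c v w) = ?S + ?S + ?D"
    using d0 by (simp add: add.assoc)
  then show ?case using IH c2[of ?S] by simp
qed

lemma mext_alt:
  assumes c2: "\<And>z::'a::comm_ring_1. z + z = 0"
  shows "dslot scale (length bs) \<psi> \<Longrightarrow> altn (length bs) \<psi> \<Longrightarrow> set bs \<subseteq> free_mod \<Longrightarrow>
    i < j \<Longrightarrow> j < length bs \<Longrightarrow> bs ! i = bs ! j \<Longrightarrow> mext \<psi> bs = (0::'a)"
proof (induction bs arbitrary: \<psi> i j)
  case Nil
  then show ?case by simp
next
  case (Cons b bs)
  show ?case
  proof (cases i)
    case (Suc i')
    then obtain j' where j: "j = Suc j'" using Cons.prems(4) by (cases j) auto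
    have "mext (\<lambda>vs. \<psi> (v # vs)) bs = 0" for v
    proof (rule Cons.IH[of _ i' j'])
      show "dslot scale (length bs) (\<lambda>vs. \<psi> (v # vs))" using Cons.prems(1) by (simp add: dslot_tail)
      show "altn (length bs) (\<lambda>vs. \<psi> (v # vs))" using Cons.prems(2) by (simp add: altn_tail)
      show "set bs \<subseteq> free_mod" using Cons.prems(3) by simp
      show "i' < j'" "j' < length bs" using Cons.prems(4,5) Suc j by auto
      show "bs ! i' = bs ! j'" using Cons.prems(6) Suc j by simp
    qed
    then show ?thesis by simp
  next
    case 0
    then obtain m where j: "j = Suc m" using Cons.prems(4) by (cases j) auto
    have m: "m < length bs" "bs ! m = b" using Cons.prems j 0 by auto
    have fb: "b \<in> free_mod" "set bs \<subseteq> free_mod" using Cons.prems by auto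
    let ?T = "fsupp b"
    have fT: "finite ?T" using fb by (simp add: free_mod_iff)
    define c where "c v w = mext (\<lambda>vs. \<psi> (v # vs[m := w])) (bs[m := dgen 0])" for v w
    have exp: "mext (\<lambda>vs. \<psi> (v # vs)) bs = (\<Sum>w\<in>?T. b w * c v w)" for v
    proof -
      have "mext (\<lambda>vs. \<psi> (v # vs)) (bs[m := b]) = (\<Sum>w\<in>?T. b w * mext (\<lambda>vs. \<psi> (v # vs)) (bs[m := dgen w]))"
      proof (rule lin_expand[where G = "\<lambda>c. mext (\<lambda>vs. \<psi> (v # vs)) (bs[m := c])"])
        fix c d :: "'a \<Rightarrow> 'a" assume "c \<in> free_mod" "d \<in> free_mod"
        then show "mext (\<lambda>vs. \<psi> (v # vs)) (bs[m := fadd c d]) =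
            mext (\<lambda>vs. \<psi> (v # vs)) (bs[m := c]) + mext (\<lambda>vs. \<psi> (v # vs)) (bs[m := d])"
          by (rule mext_add[OF m(1)])
      next
        fix a and c :: "'a \<Rightarrow> 'a" assume "c \<in> free_mod"
        then show "mext (\<lambda>vs. \<psi> (v # vs)) (bs[m := amul a c]) = a * mext (\<lambda>vs. \<psi> (v # vs)) (bs[m := c])"
          by (rule mext_amul[OF m(1)])
      qed (use fT in auto)
      also have "\<dots> = (\<Sum>w\<in>?T. b w * c v w)"
        unfolding c_def using m by (intro sum.cong refl arg_cong[where f = "(*) _"]) (rule mext_key, simp)
      moreover have "bs[m := b] = bs" using m(2) list_update_id[of bs m] by simp
      ultimately show ?thesis by simp
    qed
    have dg: "\<forall>v\<in>?T. c v v = 0"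
    proof
      fix v
      have "c v v = mext (\<lambda>vs. 0) (bs[m := dgen 0])"
        unfolding c_def
      proof (rule mext_cong)
        fix vs :: "'a list" assume "length vs = length (bs[m := dgen 0])"
        then have l: "length (v # vs[m := v]) = Suc (length bs)" "m < length vs" using m by auto
        have "(v # vs[m := v]) ! 0 = (v # vs[m := v]) ! Suc m" using l by simp
        then show "\<psi> (v # vs[m := v]) = 0"
          using Cons.prems(2) l m unfolding altn_def by (metis Suc_mono length_Cons zero_less_Suc)
      qed
      then show "c v v = 0" by (simp add: mext_zero_fun)
    qed
    have sy: "\<forall>v\<in>?T. \<forall>w\<in>?T. c v w = c w v"
    proof (intro ballI)
      fix v w
      have "c v w + c w v = mext (\<lambda>vs. 0) (bs[m := dgen 0])"
        unfolding c_def mext_plus_fun[symmetric]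
      proof (rule mext_cong)
        fix vs :: "'a list" assume "length vs = length (bs[m := dgen 0])"
        then have lv: "length (v # vs) = Suc (length bs)" by simp
        have "\<psi> ((v # vs)[0 := v, Suc m := w]) + \<psi> ((v # vs)[0 := w, Suc m := v]) = 0"
          using antisym_slot[OF _ _ lv, of scale \<psi> 0 "Suc m" v w] Cons.prems(1,2) m by simp
        then show "\<psi> (v # vs[m := w]) + \<psi> (w # vs[m := v]) = 0" by simp
      qed
      then show "c v w = c w v" using char2_eq[OF c2] by (simp add: mext_zero_fun)
    qed
    have "mext \<psi> (b # bs) = (\<Sum>v\<in>?T. b v * (\<Sum>w\<in>?T. b w * c v w))"
      by (simp add: exp)
    also have "\<dots> = (\<Sum>v\<in>?T. \<Sum>w\<in>?T. b v * b w * c v w)"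
      by (simp add: sum_distrib_left mult.assoc)
    also have "\<dots> = 0" by (rule dsum_zero[OF c2 fT sy dg])
    finally show ?thesis .
  qed
qed




lemma ex_lt: "\<exists>lt::'a \<Rightarrow> 'a \<Rightarrow> bool. (\<forall>u. \<not> lt u u) \<and> (\<forall>u v. u \<noteq> v \<longrightarrow> lt u v \<or> lt v u) \<and> (\<forall>u v. lt u v \<longrightarrow> \<not> lt v u)"
proof -
  obtain r :: "'a rel" where wo: "Well_order r" and univ: "Field r = UNIV"
    using well_ordering[where 'a = "'a"] by blast
  have tot: "\<forall>x y. x \<noteq> y \<longrightarrow> (x, y) \<in> r \<or> (y, x) \<in> r"
    using wo univ unfolding well_order_on_def linear_order_on_def total_on_def by simp
  have anti: "antisym r"
    using wo unfolding well_order_on_def linear_order_on_def partial_order_on_def by simp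
  show ?thesis
    by (rule exI[of _ "\<lambda>u v. (u, v) \<in> r \<and> u \<noteq> v"]) (use tot anti in \<open>auto simp: antisym_def\<close>)
qed

locale thm_setup =
  fixes scale :: "'k::field \<Rightarrow> 'a::comm_ring_1 \<Rightarrow> 'a"
    and k :: nat
    and \<phi> :: "'a list \<Rightarrow> 'a" and \<omega> :: "'a \<Rightarrow> 'a list \<Rightarrow> 'a"
    and \<Phi> :: "('a \<Rightarrow> 'a) list \<Rightarrow> 'a"
    and lt :: "'a \<Rightarrow> 'a \<Rightarrow> bool"
  assumes char2: "CHAR('k) = 2"
    and ka: "unital_K_algebra scale"
    and k2: "k \<ge> 2"
    and cpa: "C_PA scale k \<phi> \<omega>"
    and Phi: "lr_phi scale k \<Phi>"
    and Phi_d: "\<And>us. length us = k \<Longrightarrow> \<Phi> (map dgen us) = \<phi> us"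
    and lt_irr: "\<And>u. \<not> lt u u"
    and lt_tri: "\<And>u v. u \<noteq> v \<Longrightarrow> lt u v \<or> lt v u"
    and lt_asym: "\<And>u v. lt u v \<Longrightarrow> \<not> lt v u"
begin

lemma sc_ldist: "scale (a + b) x = scale a x + scale b x"
  using ka unfolding unital_K_algebra_def vector_space_def by blast
lemma sc_rdist: "scale a (x + y) = scale a x + scale a y"
  using ka unfolding unital_K_algebra_def vector_space_def by blast
lemma sc_sc: "scale a (scale b x) = scale (a * b) x"
  using ka unfolding unital_K_algebra_def vector_space_def by blast
lemma sc_one: "scale 1 x = x"
  using ka unfolding unital_K_algebra_def vector_space_def by blast
lemma sc_mult: "scale c (a * b) = scale c a * b"
  using ka unfolding unital_K_algebra_def by blast
lemma sc_zero_l: "scale 0 x = 0"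
  using sc_ldist[of 0 0 x] by simp
lemma sc_zero_r: "scale c 0 = 0"
  using sc_rdist[of c 0 0] by simp

lemma k11: "(1::'k) + 1 = 0"
proof -
  have "of_nat CHAR('k) = (0::'k)" by (rule of_nat_CHAR)
  then show ?thesis using char2 by simp
qed

lemma c2: "(x::'a) + x = 0"
proof -
  have "x + x = scale 1 x + scale 1 x" by (simp add: sc_one)
  also have "\<dots> = scale (1 + 1) x" by (rule sc_ldist[symmetric])
  also have "\<dots> = 0" by (simp only: k11 sc_zero_l)
  finally show ?thesis .
qed

lemma two0: "(2::'a) = 0"
  using c2[of 1] by (simp add: one_add_one)

lemma sq_add: "((a::'a) + b) ^ 2 = a ^ 2 + b ^ 2"
proof -
  have "(a + b) ^ 2 = a ^ 2 + b ^ 2 + 2 * a * b" by (simp add: power2_sum)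
  then show ?thesis by (simp add: two0)
qed

lemma neg_eq: "- (x::'a) = x"
  using c2[of x] by (simp add: add_eq_0_iff)

lemma scale_c1_sq: "scale c 1 ^ 2 * w = scale (c ^ 2) w"
proof -
  have m: "scale c 1 * y = scale c y" for y using sc_mult[of c 1 y] by simp
  have "scale c 1 ^ 2 * w = scale c 1 * (scale c 1 * w)" by (simp add: power2_eq_square mult.assoc)
  also have "\<dots> = scale c (scale c w)" by (simp add: m)
  also have "\<dots> = scale (c ^ 2) w" by (simp add: sc_sc power2_eq_square)
  finally show ?thesis .
qed

lemma kmul_amul: "kmul scale c f = amul (scale c 1) f"
  unfolding kmul_def amul_def
proof (rule ext)
  fix v
  have "scale c (1 * f v) = scale c 1 * f v" by (rule sc_mult)
  then show "scale c (f v) = scale c 1 * f v" by simp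
qed

abbreviation "n \<equiv> k - 2"

lemma kn: "length zs = n \<Longrightarrow> Suc (Suc (length zs)) = k" using k2 by simp
lemma kn1: "1 < k" using k2 by simp
lemma kn0: "0 < k" using k2 by simp

lemma om_add: "length zs = n \<Longrightarrow> \<omega> (x + y) zs = \<omega> x zs + \<omega> y zs + \<phi> (x # y # zs)"
  using cpa unfolding C_PA_def by blast
lemma om_mult: "length zs = n \<Longrightarrow> \<omega> (x * y) zs = x ^ 2 * \<omega> y zs + y ^ 2 * \<omega> x zs + x * y * \<phi> (x # y # zs)"
  using cpa unfolding C_PA_def by blast
lemma om_scale: "length zs = n \<Longrightarrow> \<omega> (scale c x) zs = scale (c ^ 2) (\<omega> x zs)"
  using cpa unfolding C_PA_def by blast
lemma om_sadd: "length zs = n \<Longrightarrow> i < n \<Longrightarrow> \<omega> x (zs[i := u + v]) = \<omega> x (zs[i := u]) + \<omega> x (zs[i := v])"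
proof -
  have H: "\<forall>x zs i u v. length zs = k - 2 \<longrightarrow> i < k - 2 \<longrightarrow>
        \<omega> x (zs[i := u + v]) = \<omega> x (zs[i := u]) + \<omega> x (zs[i := v])"
    using cpa unfolding C_PA_def by (elim conjE) assumption
  then show "length zs = n \<Longrightarrow> i < n \<Longrightarrow> \<omega> x (zs[i := u + v]) = \<omega> x (zs[i := u]) + \<omega> x (zs[i := v])" by simp
qed
lemma om_sscale: "length zs = n \<Longrightarrow> i < n \<Longrightarrow> \<omega> x (zs[i := scale c u]) = scale c (\<omega> x (zs[i := u]))"
proof -
  have H: "\<forall>x zs i c u. length zs = k - 2 \<longrightarrow> i < k - 2 \<longrightarrow>
        \<omega> x (zs[i := scale c u]) = scale c (\<omega> x (zs[i := u]))"
    using cpa unfolding C_PA_def by (elim conjE) assumption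
  then show "length zs = n \<Longrightarrow> i < n \<Longrightarrow> \<omega> x (zs[i := scale c u]) = scale c (\<omega> x (zs[i := u]))" by simp
qed
lemma om_smult: "length zs = n \<Longrightarrow> i < n \<Longrightarrow> \<omega> x (zs[i := u * v]) = u * \<omega> x (zs[i := v]) + v * \<omega> x (zs[i := u])"
proof -
  have H: "\<forall>x zs i u v. length zs = k - 2 \<longrightarrow> i < k - 2 \<longrightarrow>
        \<omega> x (zs[i := u * v]) = u * \<omega> x (zs[i := v]) + v * \<omega> x (zs[i := u])"
    using cpa unfolding C_PA_def by (elim conjE) assumption
  then show "length zs = n \<Longrightarrow> i < n \<Longrightarrow> \<omega> x (zs[i := u * v]) = u * \<omega> x (zs[i := v]) + v * \<omega> x (zs[i := u])" by simp
qed
lemma om_alt: "altn n (\<omega> x)"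
proof -
  have H: "\<forall>x zs i j. length zs = k - 2 \<longrightarrow> i < j \<longrightarrow> j < k - 2 \<longrightarrow> zs ! i = zs ! j \<longrightarrow> \<omega> x zs = 0"
    using cpa unfolding C_PA_def by (elim conjE) assumption
  then show ?thesis unfolding altn_def by blast
qed
lemma ph_alt: "length xs = k \<Longrightarrow> i < j \<Longrightarrow> j < k \<Longrightarrow> xs ! i = xs ! j \<Longrightarrow> \<phi> xs = 0"
proof -
  have H: "\<forall>xs i j. length xs = k \<longrightarrow> i < j \<longrightarrow> j < k \<longrightarrow> xs ! i = xs ! j \<longrightarrow> \<phi> xs = 0"
    using cpa unfolding C_PA_def multider_def by (elim conjE) assumption
  then show "length xs = k \<Longrightarrow> i < j \<Longrightarrow> j < k \<Longrightarrow> xs ! i = xs ! j \<Longrightarrow> \<phi> xs = 0" by blast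
qed

lemma om_slot1: "length zs = n \<Longrightarrow> i < n \<Longrightarrow> \<omega> x (zs[i := 1]) = 0"
proof -
  assume h: "length zs = n" "i < n"
  have "\<omega> x (zs[i := 1 * 1]) = 1 * \<omega> x (zs[i := 1]) + 1 * \<omega> x (zs[i := 1])"
    using om_smult[OF h] .
  then have "\<omega> x (zs[i := 1]) = \<omega> x (zs[i := 1]) + \<omega> x (zs[i := 1])" by simp
  then show ?thesis using c2 by simp
qed

lemma dslot_om: "dslot scale n (\<omega> x)"
  unfolding dslot_def
  using om_sadd om_smult om_sscale om_slot1 sc_zero_r by simp

lemma om_one: "length zs = n \<Longrightarrow> \<omega> 1 zs = 0"
proof -
  assume h: "length zs = n"
  have "\<phi> (1 # 1 # zs) = 0" using ph_alt[of "1 # 1 # zs" 0 1] h kn kn1 kn0 by simp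
  then have "\<omega> 1 zs = \<omega> 1 zs + \<omega> 1 zs" using om_mult[OF h, of 1 1] by simp
  then show ?thesis using c2 by simp
qed

lemma Ph_wd: "length as = k \<Longrightarrow> set as \<subseteq> free_mod \<Longrightarrow> set bs \<subseteq> free_mod \<Longrightarrow>
    list_all2 (kaehler_eq scale) as bs \<Longrightarrow> \<Phi> as = \<Phi> bs"
proof -
  have H: "\<forall>as bs. length as = k \<longrightarrow> set as \<subseteq> free_mod \<longrightarrow> set bs \<subseteq> free_mod \<longrightarrow>
        list_all2 (kaehler_eq scale) as bs \<longrightarrow> \<Phi> as = \<Phi> bs"
    using Phi unfolding lr_phi_def by (elim conjE) assumption
  show "length as = k \<Longrightarrow> set as \<subseteq> free_mod \<Longrightarrow> set bs \<subseteq> free_mod \<Longrightarrow>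
    list_all2 (kaehler_eq scale) as bs \<Longrightarrow> \<Phi> as = \<Phi> bs" using H by simp
qed
lemma Ph_add: "length as = k \<Longrightarrow> set as \<subseteq> free_mod \<Longrightarrow> i < k \<Longrightarrow> \<alpha> \<in> free_mod \<Longrightarrow> \<beta> \<in> free_mod \<Longrightarrow>
    \<Phi> (as[i := fadd \<alpha> \<beta>]) = \<Phi> (as[i := \<alpha>]) + \<Phi> (as[i := \<beta>])"
proof -
  have H: "\<forall>as i \<alpha> \<beta>. length as = k \<longrightarrow> set as \<subseteq> free_mod \<longrightarrow> i < k \<longrightarrow>
        \<alpha> \<in> free_mod \<longrightarrow> \<beta> \<in> free_mod \<longrightarrow>
        \<Phi> (as[i := fadd \<alpha> \<beta>]) = \<Phi> (as[i := \<alpha>]) + \<Phi> (as[i := \<beta>])"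
    using Phi unfolding lr_phi_def by (elim conjE) assumption
  show "length as = k \<Longrightarrow> set as \<subseteq> free_mod \<Longrightarrow> i < k \<Longrightarrow> \<alpha> \<in> free_mod \<Longrightarrow> \<beta> \<in> free_mod \<Longrightarrow>
    \<Phi> (as[i := fadd \<alpha> \<beta>]) = \<Phi> (as[i := \<alpha>]) + \<Phi> (as[i := \<beta>])" using H by simp
qed
lemma Ph_amul: "length as = k \<Longrightarrow> set as \<subseteq> free_mod \<Longrightarrow> i < k \<Longrightarrow> \<alpha> \<in> free_mod \<Longrightarrow>
    \<Phi> (as[i := amul a \<alpha>]) = a * \<Phi> (as[i := \<alpha>])"
proof -
  have H: "\<forall>as i a \<alpha>. length as = k \<longrightarrow> set as \<subseteq> free_mod \<longrightarrow> i < k \<longrightarrow> \<alpha> \<in> free_mod \<longrightarrow>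
        \<Phi> (as[i := amul a \<alpha>]) = a * \<Phi> (as[i := \<alpha>])"
    using Phi unfolding lr_phi_def by (elim conjE) assumption
  show "length as = k \<Longrightarrow> set as \<subseteq> free_mod \<Longrightarrow> i < k \<Longrightarrow> \<alpha> \<in> free_mod \<Longrightarrow>
    \<Phi> (as[i := amul a \<alpha>]) = a * \<Phi> (as[i := \<alpha>])" using H by simp
qed
lemma Ph_alt: "length as = k \<Longrightarrow> set as \<subseteq> free_mod \<Longrightarrow> i < j \<Longrightarrow> j < k \<Longrightarrow>
    as ! i = as ! j \<Longrightarrow> \<Phi> as = 0"
proof -
  have H: "\<forall>as i j. length as = k \<longrightarrow> set as \<subseteq> free_mod \<longrightarrow> i < j \<longrightarrow> j < k \<longrightarrow>
        as ! i = as ! j \<longrightarrow> \<Phi> as = 0"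
    using Phi unfolding lr_phi_def by (elim conjE) assumption
  show "length as = k \<Longrightarrow> set as \<subseteq> free_mod \<Longrightarrow> i < j \<Longrightarrow> j < k \<Longrightarrow>
    as ! i = as ! j \<Longrightarrow> \<Phi> as = 0" using H by blast
qed

definition okl :: "('a \<Rightarrow> 'a) list \<Rightarrow> bool" where
  "okl bs \<longleftrightarrow> length bs = n \<and> set bs \<subseteq> free_mod"

lemma Ph0_add: "okl bs \<Longrightarrow> a \<in> free_mod \<Longrightarrow> b \<in> free_mod \<Longrightarrow> c \<in> free_mod \<Longrightarrow>
    \<Phi> (fadd a b # c # bs) = \<Phi> (a # c # bs) + \<Phi> (b # c # bs)"
  using Ph_add[of "a # c # bs" 0 a b] kn kn1 kn0 unfolding okl_def by simp
lemma Ph1_add: "okl bs \<Longrightarrow> a \<in> free_mod \<Longrightarrow> b \<in> free_mod \<Longrightarrow> c \<in> free_mod \<Longrightarrow>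
    \<Phi> (c # fadd a b # bs) = \<Phi> (c # a # bs) + \<Phi> (c # b # bs)"
  using Ph_add[of "c # a # bs" 1 a b] kn kn1 kn0 unfolding okl_def by simp
lemma Ph0_amul: "okl bs \<Longrightarrow> a \<in> free_mod \<Longrightarrow> c \<in> free_mod \<Longrightarrow>
    \<Phi> (amul x a # c # bs) = x * \<Phi> (a # c # bs)"
  using Ph_amul[of "a # c # bs" 0 a x] kn kn1 kn0 unfolding okl_def by simp
lemma Ph1_amul: "okl bs \<Longrightarrow> a \<in> free_mod \<Longrightarrow> c \<in> free_mod \<Longrightarrow>
    \<Phi> (c # amul x a # bs) = x * \<Phi> (c # a # bs)"
  using Ph_amul[of "c # a # bs" 1 a x] kn kn1 kn0 unfolding okl_def by simp
lemma Ph_diag: "okl bs \<Longrightarrow> a \<in> free_mod \<Longrightarrow> \<Phi> (a # a # bs) = 0"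
  using Ph_alt[of "a # a # bs" 0 1] kn kn1 kn0 unfolding okl_def by simp

lemma Ph_antisym: "okl bs \<Longrightarrow> a \<in> free_mod \<Longrightarrow> b \<in> free_mod \<Longrightarrow> \<Phi> (a # b # bs) = \<Phi> (b # a # bs)"
proof -
  assume h: "okl bs" "a \<in> free_mod" "b \<in> free_mod"
  have fab: "fadd a b \<in> free_mod" using h by (simp add: fadd_free)
  note e1 = Ph_diag[OF h(1) fab]
  note e2 = Ph0_add[OF h(1) h(2) h(3) fab]
  note e3 = Ph1_add[OF h(1) h(2) h(3) h(2)]
  note e4 = Ph1_add[OF h(1) h(2) h(3) h(3)]
  note e5 = Ph_diag[OF h(1) h(2)]
  note e6 = Ph_diag[OF h(1) h(3)]
  have "\<Phi> (a # b # bs) + \<Phi> (b # a # bs) = \<Phi> (fadd a b # fadd a b # bs)"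
    unfolding e2 e3 e4 e5 e6 by simp
  then have "\<Phi> (a # b # bs) + \<Phi> (b # a # bs) = 0" unfolding e1 .
  then show ?thesis by (rule char2_eq[OF c2])
qed

lemma Ph0_wd: "okl bs \<Longrightarrow> a \<in> free_mod \<Longrightarrow> a' \<in> free_mod \<Longrightarrow> c \<in> free_mod \<Longrightarrow> kaehler_eq scale a a' \<Longrightarrow>
    \<Phi> (a # c # bs) = \<Phi> (a' # c # bs)"
proof -
  assume h: "okl bs" "a \<in> free_mod" "a' \<in> free_mod" "c \<in> free_mod" "kaehler_eq scale a a'"
  have "list_all2 (kaehler_eq scale) bs bs"
    using h(1) unfolding okl_def by (intro list.rel_refl_strong) (auto intro: keq_refl)
  moreover have "kaehler_eq scale c c" by (rule keq_refl[OF h(4)])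
  ultimately have la: "list_all2 (kaehler_eq scale) (a # c # bs) (a' # c # bs)"
    using h(5) by simp
  show ?thesis
  proof (rule Ph_wd[OF _ _ _ la])
    show "length (a # c # bs) = k" using h(1) kn kn1 kn0 unfolding okl_def by simp
    show "set (a # c # bs) \<subseteq> free_mod" using h unfolding okl_def by simp
    show "set (a' # c # bs) \<subseteq> free_mod" using h unfolding okl_def by simp
  qed
qed

lemma Ph1_zero: "okl bs \<Longrightarrow> c \<in> free_mod \<Longrightarrow> \<Phi> (c # (\<lambda>_. 0) # bs) = 0"
  using Ph1_amul[of bs "\<lambda>_. 0" c 0] zero_free by (simp add: zero_amul[symmetric])

lemma Ph0_rel: "okl bs \<Longrightarrow> r \<in> kaehler_rel scale \<Longrightarrow> c \<in> free_mod \<Longrightarrow> \<Phi> (r # c # bs) = 0"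
proof -
  assume h: "okl bs" "r \<in> kaehler_rel scale" "c \<in> free_mod"
  have "kaehler_eq scale r (\<lambda>_. 0)" using h(2) unfolding kaehler_eq_def fsub_def by simp
  then have "\<Phi> (r # c # bs) = \<Phi> ((\<lambda>_. 0) # c # bs)"
    by (rule Ph0_wd[OF h(1) rel_free[OF h(2)] zero_free h(3)])
  also have "\<dots> = \<Phi> (c # (\<lambda>_. 0) # bs)" by (rule Ph_antisym[OF h(1) zero_free h(3)])
  finally show ?thesis using Ph1_zero h by simp
qed

end



context thm_setup begin

lemma MLin_Phi2:
  assumes a: "a \<in> free_mod" and b: "b \<in> free_mod"
  shows "MLin n (\<lambda>cs. \<Phi> (a # b # cs))"
  unfolding MLin_def
proof (intro conjI allI impI)
  fix bs :: "('a \<Rightarrow> 'a) list" and i and c d :: "'a \<Rightarrow> 'a"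
  assume h: "length bs = n" "set bs \<subseteq> free_mod" "i < n" "c \<in> free_mod" "d \<in> free_mod"
  have l: "length (a # b # bs) = k" using kn[OF h(1)] by simp
  have s: "set (a # b # bs) \<subseteq> free_mod" using h a b by simp
  have i: "Suc (Suc i) < k" using h(3) k2 by simp
  show "\<Phi> (a # b # bs[i := fadd c d]) = \<Phi> (a # b # bs[i := c]) + \<Phi> (a # b # bs[i := d])"
    using Ph_add[OF l s i h(4,5)] by simp
next
  fix bs :: "('a \<Rightarrow> 'a) list" and i x and c :: "'a \<Rightarrow> 'a"
  assume h: "length bs = n" "set bs \<subseteq> free_mod" "i < n" "c \<in> free_mod"
  have l: "length (a # b # bs) = k" using kn[OF h(1)] by simp
  have s: "set (a # b # bs) \<subseteq> free_mod" using h a b by simp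
  have i: "Suc (Suc i) < k" using h(3) k2 by simp
  show "\<Phi> (a # b # bs[i := amul x c]) = x * \<Phi> (a # b # bs[i := c])"
    using Ph_amul[OF l s i h(4)] by simp
qed

lemma Ph_exp:
  assumes "okl bs"
  shows "\<Phi> (dgen x # dgen y # bs) = mext (\<lambda>vs. \<phi> (x # y # vs)) bs"
proof -
  have ln: "length bs = n" and sb: "set bs \<subseteq> free_mod" using assms unfolding okl_def by auto
  have "\<Phi> (dgen x # dgen y # bs) = mext (\<lambda>vs. \<Phi> (dgen x # dgen y # map dgen vs)) bs"
    using MLin_expand[of bs "\<lambda>cs. \<Phi> (dgen x # dgen y # cs)"] MLin_Phi2[OF dgen_free dgen_free] ln sb
    by simp
  also have "\<dots> = mext (\<lambda>vs. \<phi> (x # y # vs)) bs"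
  proof (rule mext_cong)
    fix vs :: "'a list" assume "length vs = length bs"
    then have "length (x # y # vs) = k" using kn[OF ln] by simp
    then show "\<Phi> (dgen x # dgen y # map dgen vs) = \<phi> (x # y # vs)"
      using Phi_d[of "x # y # vs"] by simp
  qed
  finally show ?thesis .
qed

lemma oh_mult:
  assumes "okl bs"
  shows "mext (\<omega> (x * y)) bs = x ^ 2 * mext (\<omega> y) bs + y ^ 2 * mext (\<omega> x) bs + x * y * \<Phi> (dgen x # dgen y # bs)"
proof -
  have ln: "length bs = n" using assms unfolding okl_def by auto
  have "mext (\<omega> (x * y)) bs = mext (\<lambda>vs. x ^ 2 * \<omega> y vs + y ^ 2 * \<omega> x vs + x * y * \<phi> (x # y # vs)) bs"
    by (rule mext_cong) (simp add: om_mult ln)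
  also have "\<dots> = x ^ 2 * mext (\<omega> y) bs + y ^ 2 * mext (\<omega> x) bs + x * y * mext (\<lambda>vs. \<phi> (x # y # vs)) bs"
    by (simp only: mext_plus_fun mext_times_fun)
  also have "mext (\<lambda>vs. \<phi> (x # y # vs)) bs = \<Phi> (dgen x # dgen y # bs)"
    using Ph_exp[OF assms] by simp
  finally show ?thesis .
qed

lemma oh_add:
  assumes "okl bs"
  shows "mext (\<omega> (x + y)) bs = mext (\<omega> x) bs + mext (\<omega> y) bs + \<Phi> (dgen x # dgen y # bs)"
proof -
  have ln: "length bs = n" using assms unfolding okl_def by auto
  have "mext (\<omega> (x + y)) bs = mext (\<lambda>vs. \<omega> x vs + \<omega> y vs + \<phi> (x # y # vs)) bs"
    by (rule mext_cong) (simp add: om_add ln)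
  also have "\<dots> = mext (\<omega> x) bs + mext (\<omega> y) bs + mext (\<lambda>vs. \<phi> (x # y # vs)) bs"
    by (simp only: mext_plus_fun)
  also have "mext (\<lambda>vs. \<phi> (x # y # vs)) bs = \<Phi> (dgen x # dgen y # bs)"
    using Ph_exp[OF assms] by simp
  finally show ?thesis .
qed

lemma oh_const:
  assumes "okl bs"
  shows "mext (\<omega> (scale c 1)) bs = 0"
proof -
  have ln: "length bs = n" using assms unfolding okl_def by auto
  have "mext (\<omega> (scale c 1)) bs = mext (\<lambda>vs. 0) bs"
  proof (rule mext_cong)
    fix vs :: "'a list" assume "length vs = length bs"
    then have l: "length vs = n" using ln by simp
    show "\<omega> (scale c 1) vs = 0" using om_scale[OF l, of c 1] om_one[OF l] sc_zero_r by simp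
  qed
  then show ?thesis by (simp add: mext_zero_fun)
qed

definition QT :: "('a \<Rightarrow> 'a) \<Rightarrow> 'a set \<Rightarrow> ('a \<Rightarrow> 'a) list \<Rightarrow> 'a" where
  "QT \<alpha> T bs = (\<Sum>u\<in>T. \<alpha> u ^ 2 * mext (\<omega> u) bs) +
     (\<Sum>u\<in>T. \<Sum>v\<in>T. if lt u v then \<alpha> u * \<alpha> v * \<Phi> (dgen u # dgen v # bs) else 0)"

definition Wc :: "('a \<Rightarrow> 'a) \<Rightarrow> ('a \<Rightarrow> 'a) list \<Rightarrow> 'a" where
  "Wc \<alpha> bs = QT \<alpha> (fsupp \<alpha>) bs"

lemma QT_ext:
  assumes fin: "finite T'" and sub: "T \<subseteq> T'" and z: "\<forall>u\<in>T' - T. \<alpha> u = 0"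
  shows "QT \<alpha> T bs = QT \<alpha> T' bs"
proof -
  let ?F = "\<lambda>u v. if lt u v then \<alpha> u * \<alpha> v * \<Phi> (dgen u # dgen v # bs) else 0"
  have A: "(\<Sum>u\<in>T. \<alpha> u ^ 2 * mext (\<omega> u) bs) = (\<Sum>u\<in>T'. \<alpha> u ^ 2 * mext (\<omega> u) bs)"
    by (rule sum.mono_neutral_left[OF fin sub]) (use z in simp)
  have B1: "(\<Sum>v\<in>T. ?F u v) = (\<Sum>v\<in>T'. ?F u v)" for u
    by (rule sum.mono_neutral_left[OF fin sub]) (use z in simp)
  have B2: "(\<Sum>u\<in>T. \<Sum>v\<in>T'. ?F u v) = (\<Sum>u\<in>T'. \<Sum>v\<in>T'. ?F u v)"
  proof (rule sum.mono_neutral_left[OF fin sub], intro ballI)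
    fix u assume "u \<in> T' - T"
    then have "\<alpha> u = 0" using z by blast
    then show "(\<Sum>v\<in>T'. ?F u v) = 0" by (intro sum.neutral ballI) simp
  qed
  show ?thesis unfolding QT_def A B1 B2 ..
qed

lemma Wc_QT: "finite T \<Longrightarrow> fsupp \<alpha> \<subseteq> T \<Longrightarrow> Wc \<alpha> bs = QT \<alpha> T bs"
  unfolding Wc_def by (rule QT_ext) (auto simp: fsupp_def)

lemma pair_split:
  assumes fin: "finite T"
  shows "(\<Sum>u\<in>T. \<Sum>v\<in>T. h u v) =
    (\<Sum>u\<in>T. \<Sum>v\<in>T. if lt u v then h u v + h v u else 0) + (\<Sum>u\<in>T. h u u)"
proof -
  have pt: "h u v = (if lt u v then h u v else 0) + (if lt v u then h u v else 0) + (if u = v then h u v else 0)" for u v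
    using lt_tri[of u v] lt_asym[of u v] lt_irr[of u] by auto
  have "(\<Sum>u\<in>T. \<Sum>v\<in>T. h u v) =
      (\<Sum>u\<in>T. \<Sum>v\<in>T. if lt u v then h u v else 0) + (\<Sum>u\<in>T. \<Sum>v\<in>T. if lt v u then h u v else 0) +
      (\<Sum>u\<in>T. \<Sum>v\<in>T. if u = v then h u v else 0)"
    by (subst pt) (simp only: sum.distrib)
  also have "(\<Sum>u\<in>T. \<Sum>v\<in>T. if lt v u then h u v else 0) = (\<Sum>v\<in>T. \<Sum>u\<in>T. if lt v u then h u v else 0)"
    by (rule sum.swap)
  also have "(\<Sum>u\<in>T. \<Sum>v\<in>T. if u = v then h u v else 0) = (\<Sum>u\<in>T. h u u)"
    using fin by (intro sum.cong refl) simp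
  also have "(\<Sum>u\<in>T. \<Sum>v\<in>T. if lt u v then h u v else 0) + (\<Sum>v\<in>T. \<Sum>u\<in>T. if lt v u then h u v else 0)
      = (\<Sum>u\<in>T. \<Sum>v\<in>T. if lt u v then h u v + h v u else 0)"
    by (simp only: sum.distrib[symmetric]) (intro sum.cong refl, simp)
  finally show ?thesis .
qed

end



context thm_setup begin

lemma Wc_dgen: "Wc (dgen u) bs = mext (\<omega> u) bs"
proof -
  have "Wc (dgen u) bs = QT (dgen u) {u} bs" by (rule Wc_QT) (simp_all add: fsupp_dgen)
  also have "\<dots> = mext (\<omega> u) bs" unfolding QT_def by (simp add: dgen_def lt_irr)
  finally show ?thesis .
qed

lemma Wc_zero: "Wc (\<lambda>_. 0) bs = 0"
  unfolding Wc_def QT_def fsupp_def by simp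

lemma Wc_amul:
  assumes "\<alpha> \<in> free_mod"
  shows "Wc (amul a \<alpha>) bs = a ^ 2 * Wc \<alpha> bs"
proof -
  let ?T = "fsupp \<alpha>"
  have fT: "finite ?T" using assms by (simp add: free_mod_iff)
  have "Wc (amul a \<alpha>) bs = QT (amul a \<alpha>) ?T bs" by (rule Wc_QT[OF fT fsupp_amul])
  also have "\<dots> = (\<Sum>u\<in>?T. a ^ 2 * (\<alpha> u ^ 2 * mext (\<omega> u) bs)) +
     (\<Sum>u\<in>?T. \<Sum>v\<in>?T. a ^ 2 * (if lt u v then \<alpha> u * \<alpha> v * \<Phi> (dgen u # dgen v # bs) else 0))"
    unfolding QT_def amul_def
    by (intro arg_cong2[where f = "(+)"] sum.cong refl) (simp_all add: power2_eq_square ac_simps)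
  also have "\<dots> = a ^ 2 * QT \<alpha> ?T bs"
    unfolding QT_def by (simp only: sum_distrib_left[symmetric] distrib_left)
  also have "QT \<alpha> ?T bs = Wc \<alpha> bs" unfolding Wc_def ..
  finally show ?thesis .
qed

lemma Ph_expand2:
  assumes bs: "okl bs" and a: "\<alpha> \<in> free_mod" and a': "\<alpha>' \<in> free_mod"
    and fT: "finite T" and sT: "fsupp \<alpha> \<subseteq> T" and sT': "fsupp \<alpha>' \<subseteq> T"
  shows "\<Phi> (\<alpha> # \<alpha>' # bs) = (\<Sum>u\<in>T. \<Sum>v\<in>T. \<alpha> u * \<alpha>' v * \<Phi> (dgen u # dgen v # bs))"
proof -
  have "\<Phi> (\<alpha> # \<alpha>' # bs) = (\<Sum>u\<in>T. \<alpha> u * \<Phi> (dgen u # \<alpha>' # bs))"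
  proof (rule lin_expand[where G = "\<lambda>c. \<Phi> (c # \<alpha>' # bs)", OF _ _ fT sT])
    fix b c :: "'a \<Rightarrow> 'a" assume "b \<in> free_mod" "c \<in> free_mod"
    then show "\<Phi> (fadd b c # \<alpha>' # bs) = \<Phi> (b # \<alpha>' # bs) + \<Phi> (c # \<alpha>' # bs)"
      using Ph0_add[OF bs _ _ a'] by simp
  next
    fix x and b :: "'a \<Rightarrow> 'a" assume "b \<in> free_mod"
    then show "\<Phi> (amul x b # \<alpha>' # bs) = x * \<Phi> (b # \<alpha>' # bs)"
      using Ph0_amul[OF bs _ a'] by simp
  qed
  also have "\<dots> = (\<Sum>u\<in>T. \<alpha> u * (\<Sum>v\<in>T. \<alpha>' v * \<Phi> (dgen u # dgen v # bs)))"
  proof (intro sum.cong refl arg_cong[where f = "(*) _"])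
    fix u
    show "\<Phi> (dgen u # \<alpha>' # bs) = (\<Sum>v\<in>T. \<alpha>' v * \<Phi> (dgen u # dgen v # bs))"
    proof (rule lin_expand[where G = "\<lambda>c. \<Phi> (dgen u # c # bs)", OF _ _ fT sT'])
      fix b c :: "'a \<Rightarrow> 'a" assume "b \<in> free_mod" "c \<in> free_mod"
      then show "\<Phi> (dgen u # fadd b c # bs) = \<Phi> (dgen u # b # bs) + \<Phi> (dgen u # c # bs)"
        using Ph1_add[OF bs _ _ dgen_free] by simp
    next
      fix x and b :: "'a \<Rightarrow> 'a" assume "b \<in> free_mod"
      then show "\<Phi> (dgen u # amul x b # bs) = x * \<Phi> (dgen u # b # bs)"
        using Ph1_amul[OF bs _ dgen_free] by simp
    qed
  qed
  also have "\<dots> = (\<Sum>u\<in>T. \<Sum>v\<in>T. \<alpha> u * \<alpha>' v * \<Phi> (dgen u # dgen v # bs))"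
    by (simp add: sum_distrib_left mult.assoc)
  finally show ?thesis .
qed

lemma Wc_fadd:
  assumes bs: "okl bs" and a: "\<alpha> \<in> free_mod" and a': "\<alpha>' \<in> free_mod"
  shows "Wc (fadd \<alpha> \<alpha>') bs = Wc \<alpha> bs + Wc \<alpha>' bs + \<Phi> (\<alpha> # \<alpha>' # bs)"
proof -
  define T where "T = fsupp \<alpha> \<union> fsupp \<alpha>'"
  have fT: "finite T" using a a' unfolding T_def by (simp add: free_mod_iff)
  have sT: "fsupp \<alpha> \<subseteq> T" "fsupp \<alpha>' \<subseteq> T" "fsupp (fadd \<alpha> \<alpha>') \<subseteq> T"
    unfolding T_def using fsupp_fadd by auto
  define e where "e u = mext (\<omega> u) bs" for u
  define g where "g u v = \<Phi> (dgen u # dgen v # bs)" for u v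
  define h where "h u v = \<alpha> u * \<alpha>' v * g u v" for u v
  have gs: "g v u = g u v" for u v unfolding g_def by (rule Ph_antisym[OF bs dgen_free dgen_free])
  have gd: "g u u = 0" for u unfolding g_def by (rule Ph_diag[OF bs dgen_free])
  have QTe: "QT f T bs = (\<Sum>u\<in>T. f u ^ 2 * e u) + (\<Sum>u\<in>T. \<Sum>v\<in>T. if lt u v then f u * f v * g u v else 0)" for f
    unfolding QT_def e_def g_def ..
  have S1: "(\<Sum>u\<in>T. fadd \<alpha> \<alpha>' u ^ 2 * e u) = (\<Sum>u\<in>T. \<alpha> u ^ 2 * e u) + (\<Sum>u\<in>T. \<alpha>' u ^ 2 * e u)"
    unfolding sum.distrib[symmetric] by (intro sum.cong refl) (simp add: fadd_def sq_add distrib_right)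
  have pt: "(if lt u v then fadd \<alpha> \<alpha>' u * fadd \<alpha> \<alpha>' v * g u v else 0) =
      (if lt u v then \<alpha> u * \<alpha> v * g u v else 0) + (if lt u v then \<alpha>' u * \<alpha>' v * g u v else 0) +
      (if lt u v then h u v + h v u else 0)" for u v
    unfolding h_def fadd_def gs[of u v] by (simp add: algebra_simps)
  have S2: "(\<Sum>u\<in>T. \<Sum>v\<in>T. if lt u v then fadd \<alpha> \<alpha>' u * fadd \<alpha> \<alpha>' v * g u v else 0) =
      (\<Sum>u\<in>T. \<Sum>v\<in>T. if lt u v then \<alpha> u * \<alpha> v * g u v else 0) +
      (\<Sum>u\<in>T. \<Sum>v\<in>T. if lt u v then \<alpha>' u * \<alpha>' v * g u v else 0) +
      (\<Sum>u\<in>T. \<Sum>v\<in>T. if lt u v then h u v + h v u else 0)"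
    unfolding pt by (simp only: sum.distrib)
  have S3: "\<Phi> (\<alpha> # \<alpha>' # bs) = (\<Sum>u\<in>T. \<Sum>v\<in>T. if lt u v then h u v + h v u else 0)"
  proof -
    have "\<Phi> (\<alpha> # \<alpha>' # bs) = (\<Sum>u\<in>T. \<Sum>v\<in>T. h u v)"
      unfolding h_def g_def by (rule Ph_expand2[OF bs a a' fT sT(1,2)])
    also have "\<dots> = (\<Sum>u\<in>T. \<Sum>v\<in>T. if lt u v then h u v + h v u else 0) + (\<Sum>u\<in>T. h u u)"
      by (rule pair_split[OF fT])
    also have "(\<Sum>u\<in>T. h u u) = 0" unfolding h_def gd by simp
    finally show ?thesis by simp
  qed
  have "Wc (fadd \<alpha> \<alpha>') bs = QT (fadd \<alpha> \<alpha>') T bs" by (rule Wc_QT[OF fT sT(3)])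
  also have "\<dots> = QT \<alpha> T bs + QT \<alpha>' T bs + \<Phi> (\<alpha> # \<alpha>' # bs)"
    unfolding QTe S1 S2 S3 by (simp add: ac_simps)
  also have "QT \<alpha> T bs = Wc \<alpha> bs" by (rule Wc_QT[OF fT sT(1), symmetric])
  also have "QT \<alpha>' T bs = Wc \<alpha>' bs" by (rule Wc_QT[OF fT sT(2), symmetric])
  finally show ?thesis .
qed

end



context thm_setup begin

lemma Ph0_fsub: "okl bs \<Longrightarrow> a \<in> free_mod \<Longrightarrow> b \<in> free_mod \<Longrightarrow> c \<in> free_mod \<Longrightarrow>
    \<Phi> (fsub a b # c # bs) = \<Phi> (a # c # bs) + \<Phi> (b # c # bs)"
  unfolding fsub_eq by (simp add: Ph0_add Ph0_amul amul_free neg_eq)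

lemma Ph1_fsub: "okl bs \<Longrightarrow> a \<in> free_mod \<Longrightarrow> b \<in> free_mod \<Longrightarrow> c \<in> free_mod \<Longrightarrow>
    \<Phi> (c # fsub a b # bs) = \<Phi> (c # a # bs) + \<Phi> (c # b # bs)"
  unfolding fsub_eq by (simp add: Ph1_add Ph1_amul amul_free neg_eq)

lemma Wc_fsub:
  assumes "okl bs" "f \<in> free_mod" "g \<in> free_mod"
  shows "Wc (fsub f g) bs = Wc f bs + Wc g bs + \<Phi> (f # g # bs)"
proof -
  have "Wc (fsub f g) bs = Wc f bs + Wc (amul (-1) g) bs + \<Phi> (f # amul (-1) g # bs)"
    unfolding fsub_eq using assms by (simp add: Wc_fadd amul_free)
  also have "Wc (amul (-1) g) bs = Wc g bs" using assms by (simp add: Wc_amul)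
  also have "\<Phi> (f # amul (-1) g # bs) = \<Phi> (f # g # bs)" using assms by (simp add: Ph1_amul neg_eq)
  finally show ?thesis .
qed

lemma Wc_rel:
  assumes bs: "okl bs"
  shows "r \<in> kaehler_rel scale \<Longrightarrow> Wc r bs = 0"
proof (induction rule: kaehler_rel.induct)
  case zero
  then show ?case by (rule Wc_zero)
next
  case (mult x y)
  let ?E = "\<lambda>u. mext (\<omega> u) bs"
  let ?P = "\<lambda>a b. \<Phi> (a # b # bs)"
  have fr1: "dgen u \<in> free_mod" for u :: 'a by (simp add: dgen_free)
  have fr2: "amul a (dgen u) \<in> free_mod" for u a :: 'a by (simp add: dgen_free amul_free)
  note fr = fr1 fr2
  have fs: "fsub (dgen (x * y)) (amul x (dgen y)) \<in> free_mod" by (simp add: fsub_free fr)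
  have keq: "kaehler_eq scale (dgen (x * y)) (fadd (amul x (dgen y)) (amul y (dgen x)))"
  proof -
    have "fsub (dgen (x * y)) (fadd (amul x (dgen y)) (amul y (dgen x))) =
        fsub (fsub (dgen (x * y)) (amul x (dgen y))) (amul y (dgen x))"
      by (auto simp: fsub_def fadd_def amul_def)
    then show ?thesis unfolding kaehler_eq_def by (simp add: kaehler_rel.mult)
  qed
  have Pxy: "?P (dgen (x * y)) c = x * ?P (dgen y) c + y * ?P (dgen x) c" if c: "c \<in> free_mod" for c
  proof -
    have "?P (dgen (x * y)) c = ?P (fadd (amul x (dgen y)) (amul y (dgen x))) c"
      by (rule Ph0_wd[OF bs fr(1) _ c keq]) (simp add: fadd_free fr)
    also have "\<dots> = x * ?P (dgen y) c + y * ?P (dgen x) c"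
      by (simp add: Ph0_add Ph0_amul bs fr c)
    finally show ?thesis .
  qed
  have sy: "?P (dgen y) (dgen x) = ?P (dgen x) (dgen y)" by (rule Ph_antisym[OF bs fr(1) fr(1)])
  have d1: "?P (dgen y) (dgen y) = 0" "?P (dgen x) (dgen x) = 0" by (simp_all add: Ph_diag bs fr)
  have "Wc (fsub (fsub (dgen (x * y)) (amul x (dgen y))) (amul y (dgen x))) bs
      = (Wc (dgen (x * y)) bs + Wc (amul x (dgen y)) bs + ?P (dgen (x * y)) (amul x (dgen y)))
        + Wc (amul y (dgen x)) bs + (?P (dgen (x * y)) (amul y (dgen x)) + ?P (amul x (dgen y)) (amul y (dgen x)))"
    by (simp add: Wc_fsub Ph0_fsub bs fr fs)
  also have "\<dots> = (?E (x * y) + x ^ 2 * ?E y + x * ?P (dgen (x * y)) (dgen y))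
        + y ^ 2 * ?E x + (y * ?P (dgen (x * y)) (dgen x) + x * (y * ?P (dgen y) (dgen x)))"
    by (simp add: Wc_amul Wc_dgen Ph1_amul Ph0_amul bs fr)
  also have "\<dots> = (x ^ 2 * ?E y + y ^ 2 * ?E x + x * y * ?P (dgen x) (dgen y)) + x ^ 2 * ?E y + x * (y * ?P (dgen x) (dgen y))
        + y ^ 2 * ?E x + (y * (x * ?P (dgen x) (dgen y)) + x * (y * ?P (dgen x) (dgen y)))"
    by (simp add: oh_mult[OF bs] Pxy fr sy d1)
  also have "\<dots> = (x ^ 2 * ?E y + x ^ 2 * ?E y) + (y ^ 2 * ?E x + y ^ 2 * ?E x) +
      ((x * y * ?P (dgen x) (dgen y) + x * y * ?P (dgen x) (dgen y)) + (x * y * ?P (dgen x) (dgen y) + x * y * ?P (dgen x) (dgen y)))"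
    by (simp add: algebra_simps)
  also have "\<dots> = 0" by (simp add: c2)
  finally show ?case .
next
  case (add x y)
  let ?E = "\<lambda>u. mext (\<omega> u) bs"
  let ?P = "\<lambda>a b. \<Phi> (a # b # bs)"
  have fr: "dgen u \<in> free_mod" for u :: 'a by (simp add: dgen_free)
  have fs: "fsub (dgen (x + y)) (dgen x) \<in> free_mod" by (simp add: fsub_free fr)
  have keq: "kaehler_eq scale (dgen (x + y)) (fadd (dgen x) (dgen y))"
  proof -
    have "fsub (dgen (x + y)) (fadd (dgen x) (dgen y)) = fsub (fsub (dgen (x + y)) (dgen x)) (dgen y)"
      by (auto simp: fsub_def fadd_def)
    then show ?thesis unfolding kaehler_eq_def by (simp add: kaehler_rel.add)
  qed
  have Pxy: "?P (dgen (x + y)) c = ?P (dgen x) c + ?P (dgen y) c" if c: "c \<in> free_mod" for c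
  proof -
    have "?P (dgen (x + y)) c = ?P (fadd (dgen x) (dgen y)) c"
      by (rule Ph0_wd[OF bs fr _ c keq]) (simp add: fadd_free fr)
    also have "\<dots> = ?P (dgen x) c + ?P (dgen y) c"
      by (simp add: Ph0_add bs fr c)
    finally show ?thesis .
  qed
  have sy: "?P (dgen y) (dgen x) = ?P (dgen x) (dgen y)" by (rule Ph_antisym[OF bs fr fr])
  have d1: "?P (dgen y) (dgen y) = 0" "?P (dgen x) (dgen x) = 0" by (simp_all add: Ph_diag bs fr)
  have "Wc (fsub (fsub (dgen (x + y)) (dgen x)) (dgen y)) bs
      = (Wc (dgen (x + y)) bs + Wc (dgen x) bs + ?P (dgen (x + y)) (dgen x))
        + Wc (dgen y) bs + (?P (dgen (x + y)) (dgen y) + ?P (dgen x) (dgen y))"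
    by (simp add: Wc_fsub Ph0_fsub bs fr fs)
  also have "\<dots> = (?E (x + y) + ?E x + ?P (dgen (x + y)) (dgen x))
        + ?E y + (?P (dgen (x + y)) (dgen y) + ?P (dgen x) (dgen y))"
    by (simp add: Wc_dgen)
  also have "\<dots> = (?E x + ?E y + ?P (dgen x) (dgen y) + ?E x + ?P (dgen x) (dgen y))
        + ?E y + (?P (dgen x) (dgen y) + ?P (dgen x) (dgen y))"
    by (simp add: oh_add[OF bs] Pxy fr sy d1)
  also have "\<dots> = (?E x + ?E x) + (?E y + ?E y) +
      ((?P (dgen x) (dgen y) + ?P (dgen x) (dgen y)) + (?P (dgen x) (dgen y) + ?P (dgen x) (dgen y)))"
    by (simp add: algebra_simps)
  also have "\<dots> = 0" by (simp add: c2)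
  finally show ?case .
next
  case (const c)
  then show ?case by (simp add: Wc_dgen oh_const[OF bs])
next
  case (sum f g)
  then show ?case by (simp add: Wc_fadd bs rel_free Ph0_rel)
next
  case (smul f a)
  then show ?case by (simp add: Wc_amul rel_free)
qed

lemma Wc_wd_alpha:
  assumes bs: "okl bs" and a: "\<alpha> \<in> free_mod" and a': "\<alpha>' \<in> free_mod" and e: "kaehler_eq scale \<alpha> \<alpha>'"
  shows "Wc \<alpha> bs = Wc \<alpha>' bs"
proof -
  have r: "fsub \<alpha> \<alpha>' \<in> kaehler_rel scale" using e by (simp add: kaehler_eq_def)
  have fr: "fsub \<alpha> \<alpha>' \<in> free_mod" by (rule rel_free[OF r])
  have "Wc \<alpha> bs = Wc (fadd \<alpha>' (fsub \<alpha> \<alpha>')) bs" by (simp add: fadd_fsub)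
  also have "\<dots> = Wc \<alpha>' bs + Wc (fsub \<alpha> \<alpha>') bs + \<Phi> (\<alpha>' # fsub \<alpha> \<alpha>' # bs)"
    by (rule Wc_fadd[OF bs a' fr])
  also have "Wc (fsub \<alpha> \<alpha>') bs = 0" by (rule Wc_rel[OF bs r])
  also have "\<Phi> (\<alpha>' # fsub \<alpha> \<alpha>' # bs) = \<Phi> (fsub \<alpha> \<alpha>' # \<alpha>' # bs)" by (rule Ph_antisym[OF bs a' fr])
  also have "\<dots> = 0" by (rule Ph0_rel[OF bs r a'])
  finally show ?thesis by simp
qed

end



context thm_setup begin

lemma Wc_wd_bs:
  assumes bs: "okl bs" and sb': "set bs' \<subseteq> free_mod" and la: "list_all2 (kaehler_eq scale) bs bs'"
  shows "Wc \<alpha> bs = Wc \<alpha> bs'"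
proof -
  have ln: "length bs = n" and sb: "set bs \<subseteq> free_mod" using bs unfolding okl_def by auto
  have ln': "length bs' = n" using list_all2_lengthD[OF la] ln by simp
  have E: "mext (\<omega> u) bs = mext (\<omega> u) bs'" for u
    by (rule mext_welldef[OF la sb sb']) (simp add: ln dslot_om)
  have P: "\<Phi> (dgen u # dgen v # bs) = \<Phi> (dgen u # dgen v # bs')" for u v
  proof (rule Ph_wd)
    show "length (dgen u # dgen v # bs) = k" using kn[OF ln] by simp
    show "set (dgen u # dgen v # bs) \<subseteq> free_mod" using sb by (simp add: dgen_free)
    show "set (dgen u # dgen v # bs') \<subseteq> free_mod" using sb' by (simp add: dgen_free)
    show "list_all2 (kaehler_eq scale) (dgen u # dgen v # bs) (dgen u # dgen v # bs')"
      using la by (simp add: keq_refl dgen_free)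
  qed
  show ?thesis unfolding Wc_def QT_def E P ..
qed

lemma Wc_add_bs:
  assumes bs: "okl bs" and i: "i < n" and b: "b \<in> free_mod" and c: "c \<in> free_mod"
  shows "Wc \<alpha> (bs[i := fadd b c]) = Wc \<alpha> (bs[i := b]) + Wc \<alpha> (bs[i := c])"
proof -
  have ln: "length bs = n" and sb: "set bs \<subseteq> free_mod" using bs unfolding okl_def by auto
  have E: "mext (\<omega> u) (bs[i := fadd b c]) = mext (\<omega> u) (bs[i := b]) + mext (\<omega> u) (bs[i := c])" for u
    using i ln b c by (simp add: mext_add)
  have P: "\<Phi> (dgen u # dgen v # bs[i := fadd b c]) = \<Phi> (dgen u # dgen v # bs[i := b]) + \<Phi> (dgen u # dgen v # bs[i := c])" for u v
    using MLin_Phi2[OF dgen_free dgen_free, of u v] ln sb i b c unfolding MLin_def by blast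
  let ?T = "fsupp \<alpha>"
  let ?E1 = "\<lambda>u. mext (\<omega> u) (bs[i := b])" and ?E2 = "\<lambda>u. mext (\<omega> u) (bs[i := c])"
  let ?P1 = "\<lambda>u v. \<Phi> (dgen u # dgen v # bs[i := b])" and ?P2 = "\<lambda>u v. \<Phi> (dgen u # dgen v # bs[i := c])"
  have A: "(\<Sum>u\<in>?T. \<alpha> u ^ 2 * (?E1 u + ?E2 u)) = (\<Sum>u\<in>?T. \<alpha> u ^ 2 * ?E1 u) + (\<Sum>u\<in>?T. \<alpha> u ^ 2 * ?E2 u)"
    by (simp only: distrib_left sum.distrib)
  have B: "(\<Sum>u\<in>?T. \<Sum>v\<in>?T. if lt u v then \<alpha> u * \<alpha> v * (?P1 u v + ?P2 u v) else 0) =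
      (\<Sum>u\<in>?T. \<Sum>v\<in>?T. if lt u v then \<alpha> u * \<alpha> v * ?P1 u v else 0) +
      (\<Sum>u\<in>?T. \<Sum>v\<in>?T. if lt u v then \<alpha> u * \<alpha> v * ?P2 u v else 0)"
    by (simp only: sum.distrib[symmetric]) (intro sum.cong refl, simp add: distrib_left)
  show ?thesis
    unfolding Wc_def QT_def E P A B by (simp only: ac_simps)
qed

lemma Wc_amul_bs:
  assumes bs: "okl bs" and i: "i < n" and b: "b \<in> free_mod"
  shows "Wc \<alpha> (bs[i := amul a b]) = a * Wc \<alpha> (bs[i := b])"
proof -
  have ln: "length bs = n" and sb: "set bs \<subseteq> free_mod" using bs unfolding okl_def by auto
  have E: "mext (\<omega> u) (bs[i := amul a b]) = a * mext (\<omega> u) (bs[i := b])" for u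
    using i ln b by (simp add: mext_amul)
  have P: "\<Phi> (dgen u # dgen v # bs[i := amul a b]) = a * \<Phi> (dgen u # dgen v # bs[i := b])" for u v
    using MLin_Phi2[OF dgen_free dgen_free, of u v] ln sb i b unfolding MLin_def by blast
  let ?T = "fsupp \<alpha>"
  let ?E1 = "\<lambda>u. mext (\<omega> u) (bs[i := b])"
  let ?P1 = "\<lambda>u v. \<Phi> (dgen u # dgen v # bs[i := b])"
  have A: "(\<Sum>u\<in>?T. \<alpha> u ^ 2 * (a * ?E1 u)) = a * (\<Sum>u\<in>?T. \<alpha> u ^ 2 * ?E1 u)"
    by (simp only: sum_distrib_left mult.left_commute)
  have B: "(\<Sum>u\<in>?T. \<Sum>v\<in>?T. if lt u v then \<alpha> u * \<alpha> v * (a * ?P1 u v) else 0) =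
      a * (\<Sum>u\<in>?T. \<Sum>v\<in>?T. if lt u v then \<alpha> u * \<alpha> v * ?P1 u v else 0)"
    by (simp only: sum_distrib_left) (intro sum.cong refl, simp add: mult.left_commute)
  show ?thesis
    unfolding Wc_def QT_def E P A B by (simp only: distrib_left)
qed

lemma Wc_alt_bs:
  assumes bs: "okl bs" and ij: "i < j" "j < n" and eq: "bs ! i = bs ! j"
  shows "Wc \<alpha> bs = 0"
proof -
  have ln: "length bs = n" and sb: "set bs \<subseteq> free_mod" using bs unfolding okl_def by auto
  have E: "mext (\<omega> u) bs = 0" for u
  proof (rule mext_alt[OF c2, where scale = scale and i = i and j = j])
    show "dslot scale (length bs) (\<omega> u)" using ln dslot_om by simp
    show "altn (length bs) (\<omega> u)" using ln om_alt by simp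
  qed (use ln sb ij eq in auto)
  have P: "\<Phi> (dgen u # dgen v # bs) = 0" for u v
  proof (rule Ph_alt[of _ "Suc (Suc i)" "Suc (Suc j)"])
    show "length (dgen u # dgen v # bs) = k" using kn[OF ln] by simp
    show "set (dgen u # dgen v # bs) \<subseteq> free_mod" using sb by (simp add: dgen_free)
    show "Suc (Suc i) < Suc (Suc j)" using ij by simp
    show "Suc (Suc j) < k" using ij k2 by simp
    show "(dgen u # dgen v # bs) ! Suc (Suc i) = (dgen u # dgen v # bs) ! Suc (Suc j)" using eq by simp
  qed
  have Z: "(\<Sum>u\<in>fsupp \<alpha>. \<Sum>v\<in>fsupp \<alpha>. if lt u v then \<alpha> u * \<alpha> v * (0::'a) else 0) = 0"
    by (intro sum.neutral ballI) simp
  show ?thesis unfolding Wc_def QT_def E P Z by simp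
qed

lemma Wc_CLR: "C_LR scale k \<Phi> Wc"
  unfolding C_LR_def
proof (intro conjI allI impI)
  show "lr_phi scale k \<Phi>" by (rule Phi)
next
  fix \<alpha> \<alpha>' :: "'a \<Rightarrow> 'a" and bs bs' :: "('a \<Rightarrow> 'a) list"
  assume h: "\<alpha> \<in> free_mod" "\<alpha>' \<in> free_mod" "length bs = n" "set bs \<subseteq> free_mod" "set bs' \<subseteq> free_mod"
    "kaehler_eq scale \<alpha> \<alpha>'" "list_all2 (kaehler_eq scale) bs bs'"
  have ok: "okl bs" using h unfolding okl_def by simp
  have ok': "okl bs'" using h list_all2_lengthD[OF h(7)] unfolding okl_def by simp
  have "Wc \<alpha> bs = Wc \<alpha> bs'" by (rule Wc_wd_bs[OF ok h(5,7)])
  also have "\<dots> = Wc \<alpha>' bs'" by (rule Wc_wd_alpha[OF ok' h(1,2,6)])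
  finally show "Wc \<alpha> bs = Wc \<alpha>' bs'" .
next
  fix \<alpha> :: "'a \<Rightarrow> 'a" and bs :: "('a \<Rightarrow> 'a) list" and i and \<beta> \<gamma> :: "'a \<Rightarrow> 'a"
  assume h: "\<alpha> \<in> free_mod" "length bs = n" "set bs \<subseteq> free_mod" "i < n" "\<beta> \<in> free_mod" "\<gamma> \<in> free_mod"
  show "Wc \<alpha> (bs[i := fadd \<beta> \<gamma>]) = Wc \<alpha> (bs[i := \<beta>]) + Wc \<alpha> (bs[i := \<gamma>])"
    by (rule Wc_add_bs) (use h in \<open>simp_all add: okl_def\<close>)
next
  fix \<alpha> :: "'a \<Rightarrow> 'a" and bs :: "('a \<Rightarrow> 'a) list" and i a and \<beta> :: "'a \<Rightarrow> 'a"
  assume h: "\<alpha> \<in> free_mod" "length bs = n" "set bs \<subseteq> free_mod" "i < n" "\<beta> \<in> free_mod"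
  show "Wc \<alpha> (bs[i := amul a \<beta>]) = a * Wc \<alpha> (bs[i := \<beta>])"
    by (rule Wc_amul_bs) (use h in \<open>simp_all add: okl_def\<close>)
next
  fix \<alpha> :: "'a \<Rightarrow> 'a" and bs :: "('a \<Rightarrow> 'a) list" and i j
  assume h: "\<alpha> \<in> free_mod" "length bs = n" "set bs \<subseteq> free_mod" "i < j" "j < n" "bs ! i = bs ! j"
  show "Wc \<alpha> bs = 0"
    by (rule Wc_alt_bs[of bs i j]) (use h in \<open>simp_all add: okl_def\<close>)
next
  fix c and \<alpha> :: "'a \<Rightarrow> 'a" and bs :: "('a \<Rightarrow> 'a) list"
  assume h: "\<alpha> \<in> free_mod" "length bs = n" "set bs \<subseteq> free_mod"
  have "Wc (kmul scale c \<alpha>) bs = scale c 1 ^ 2 * Wc \<alpha> bs"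
    unfolding kmul_amul by (rule Wc_amul[OF h(1)])
  then show "Wc (kmul scale c \<alpha>) bs = scale (c ^ 2) (Wc \<alpha> bs)" by (simp add: scale_c1_sq)
next
  fix a and \<alpha> :: "'a \<Rightarrow> 'a" and bs :: "('a \<Rightarrow> 'a) list"
  assume h: "\<alpha> \<in> free_mod" "length bs = n" "set bs \<subseteq> free_mod"
  show "Wc (amul a \<alpha>) bs = a ^ 2 * Wc \<alpha> bs" by (rule Wc_amul[OF h(1)])
next
  fix \<alpha> \<alpha>' :: "'a \<Rightarrow> 'a" and bs :: "('a \<Rightarrow> 'a) list"
  assume h: "\<alpha> \<in> free_mod" "\<alpha>' \<in> free_mod" "length bs = n" "set bs \<subseteq> free_mod"
  show "Wc (fadd \<alpha> \<alpha>') bs = Wc \<alpha> bs + Wc \<alpha>' bs + \<Phi> (\<alpha> # \<alpha>' # bs)"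
    by (rule Wc_fadd) (use h in \<open>simp_all add: okl_def\<close>)
qed

lemma Wc_gen: "length vs = n \<Longrightarrow> Wc (dgen u) (map dgen vs) = \<omega> u vs"
  by (simp add: Wc_dgen mext_map_dgen)

end

lemma CLR_parts:
  assumes "C_LR scale k \<Phi> W"
  shows CLR_add_bs: "\<And>\<alpha> bs i \<beta> \<gamma>. \<alpha> \<in> free_mod \<Longrightarrow> length bs = k - 2 \<Longrightarrow> set bs \<subseteq> free_mod \<Longrightarrow> i < k - 2 \<Longrightarrow>
        \<beta> \<in> free_mod \<Longrightarrow> \<gamma> \<in> free_mod \<Longrightarrow>
        W \<alpha> (bs[i := fadd \<beta> \<gamma>]) = W \<alpha> (bs[i := \<beta>]) + W \<alpha> (bs[i := \<gamma>])"
    and CLR_amul_bs: "\<And>\<alpha> bs i a \<beta>. \<alpha> \<in> free_mod \<Longrightarrow> length bs = k - 2 \<Longrightarrow> set bs \<subseteq> free_mod \<Longrightarrow> i < k - 2 \<Longrightarrow>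
        \<beta> \<in> free_mod \<Longrightarrow> W \<alpha> (bs[i := amul a \<beta>]) = a * W \<alpha> (bs[i := \<beta>])"
    and CLR_amul: "\<And>a \<alpha> bs. \<alpha> \<in> free_mod \<Longrightarrow> length bs = k - 2 \<Longrightarrow> set bs \<subseteq> free_mod \<Longrightarrow>
        W (amul a \<alpha>) bs = a ^ 2 * W \<alpha> bs"
    and CLR_fadd: "\<And>\<alpha> \<alpha>' bs. \<alpha> \<in> free_mod \<Longrightarrow> \<alpha>' \<in> free_mod \<Longrightarrow> length bs = k - 2 \<Longrightarrow> set bs \<subseteq> free_mod \<Longrightarrow>
        W (fadd \<alpha> \<alpha>') bs = W \<alpha> bs + W \<alpha>' bs + \<Phi> (\<alpha> # \<alpha>' # bs)"
proof -
  have H: "(\<forall>\<alpha> bs i \<beta> \<gamma>. \<alpha> \<in> free_mod \<longrightarrow> length bs = k - 2 \<longrightarrow> set bs \<subseteq> free_mod \<longrightarrow> i < k - 2 \<longrightarrow>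
        \<beta> \<in> free_mod \<longrightarrow> \<gamma> \<in> free_mod \<longrightarrow>
        W \<alpha> (bs[i := fadd \<beta> \<gamma>]) = W \<alpha> (bs[i := \<beta>]) + W \<alpha> (bs[i := \<gamma>])) \<and>
     (\<forall>\<alpha> bs i a \<beta>. \<alpha> \<in> free_mod \<longrightarrow> length bs = k - 2 \<longrightarrow> set bs \<subseteq> free_mod \<longrightarrow> i < k - 2 \<longrightarrow>
        \<beta> \<in> free_mod \<longrightarrow> W \<alpha> (bs[i := amul a \<beta>]) = a * W \<alpha> (bs[i := \<beta>])) \<and>
     (\<forall>a \<alpha> bs. \<alpha> \<in> free_mod \<longrightarrow> length bs = k - 2 \<longrightarrow> set bs \<subseteq> free_mod \<longrightarrow>
        W (amul a \<alpha>) bs = a ^ 2 * W \<alpha> bs) \<and>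
     (\<forall>\<alpha> \<alpha>' bs. \<alpha> \<in> free_mod \<longrightarrow> \<alpha>' \<in> free_mod \<longrightarrow> length bs = k - 2 \<longrightarrow> set bs \<subseteq> free_mod \<longrightarrow>
        W (fadd \<alpha> \<alpha>') bs = W \<alpha> bs + W \<alpha>' bs + \<Phi> (\<alpha> # \<alpha>' # bs))"
    using assms unfolding C_LR_def by (elim conjE) (intro conjI; assumption)
  show "\<And>\<alpha> bs i \<beta> \<gamma>. \<alpha> \<in> free_mod \<Longrightarrow> length bs = k - 2 \<Longrightarrow> set bs \<subseteq> free_mod \<Longrightarrow> i < k - 2 \<Longrightarrow>
        \<beta> \<in> free_mod \<Longrightarrow> \<gamma> \<in> free_mod \<Longrightarrow>
        W \<alpha> (bs[i := fadd \<beta> \<gamma>]) = W \<alpha> (bs[i := \<beta>]) + W \<alpha> (bs[i := \<gamma>])"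
    using H by blast
  show "\<And>\<alpha> bs i a \<beta>. \<alpha> \<in> free_mod \<Longrightarrow> length bs = k - 2 \<Longrightarrow> set bs \<subseteq> free_mod \<Longrightarrow> i < k - 2 \<Longrightarrow>
        \<beta> \<in> free_mod \<Longrightarrow> W \<alpha> (bs[i := amul a \<beta>]) = a * W \<alpha> (bs[i := \<beta>])"
    using H by blast
  show "\<And>a \<alpha> bs. \<alpha> \<in> free_mod \<Longrightarrow> length bs = k - 2 \<Longrightarrow> set bs \<subseteq> free_mod \<Longrightarrow>
        W (amul a \<alpha>) bs = a ^ 2 * W \<alpha> bs"
    using H by blast
  show "\<And>\<alpha> \<alpha>' bs. \<alpha> \<in> free_mod \<Longrightarrow> \<alpha>' \<in> free_mod \<Longrightarrow> length bs = k - 2 \<Longrightarrow> set bs \<subseteq> free_mod \<Longrightarrow>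
        W (fadd \<alpha> \<alpha>') bs = W \<alpha> bs + W \<alpha>' bs + \<Phi> (\<alpha> # \<alpha>' # bs)"
    using H by blast
qed

lemma CLR_unique:
  fixes W1 W2 :: "('a \<Rightarrow> 'a::comm_ring_1) \<Rightarrow> ('a \<Rightarrow> 'a) list \<Rightarrow> 'a"
  assumes W1: "C_LR scale k \<Phi> W1" and W2: "C_LR scale k \<Phi> W2"
    and agree: "\<forall>u vs. length vs = k - 2 \<longrightarrow> W1 (dgen u) (map dgen vs) = W2 (dgen u) (map dgen vs)"
    and a: "\<alpha> \<in> free_mod" and ln: "length bs = k - 2" and sb: "set bs \<subseteq> free_mod"
  shows "W1 \<alpha> bs = W2 \<alpha> bs"
proof -
  have MLW: "MLin (k - 2) (W (dgen u))" if W: "C_LR scale k \<Phi> W" for W :: "('a \<Rightarrow> 'a) \<Rightarrow> ('a \<Rightarrow> 'a) list \<Rightarrow> 'a" and u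
    unfolding MLin_def using CLR_add_bs[OF W] CLR_amul_bs[OF W] dgen_free by blast
  have gen: "W1 (dgen u) bs = W2 (dgen u) bs" for u
  proof -
    have "W1 (dgen u) bs = mext (\<lambda>vs. W1 (dgen u) (map dgen vs)) bs"
      using MLin_expand[of bs "W1 (dgen u)"] MLW[OF W1] ln sb by simp
    also have "\<dots> = mext (\<lambda>vs. W2 (dgen u) (map dgen vs)) bs"
      by (rule mext_cong) (use agree ln in simp)
    also have "\<dots> = W2 (dgen u) bs"
      using MLin_expand[of bs "W2 (dgen u)"] MLW[OF W2] ln sb by simp
    finally show ?thesis .
  qed
  have main: "\<forall>\<alpha>. fsupp \<alpha> \<subseteq> T \<longrightarrow> W1 \<alpha> bs = W2 \<alpha> bs" if fT: "finite T" for T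
    using fT
  proof (induction T rule: finite_induct)
    case empty
    show ?case
    proof (intro allI impI)
      fix \<alpha> :: "'a \<Rightarrow> 'a" assume "fsupp \<alpha> \<subseteq> {}"
      then have "\<alpha> = amul 0 (\<lambda>_. 0)" by (auto simp: fsupp_def amul_def)
      then show "W1 \<alpha> bs = W2 \<alpha> bs"
        using CLR_amul[OF W1 zero_free ln sb, of 0] CLR_amul[OF W2 zero_free ln sb, of 0] by simp
    qed
  next
    case (insert t T)
    show ?case
    proof (intro allI impI)
      fix \<alpha> :: "'a \<Rightarrow> 'a" assume s: "fsupp \<alpha> \<subseteq> insert t T"
      define \<alpha>' where "\<alpha>' = \<alpha>(t := 0)"
      have s': "fsupp \<alpha>' \<subseteq> T" using s by (auto simp: fsupp_def \<alpha>'_def)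
      have f': "\<alpha>' \<in> free_mod" using s' insert.hyps(1) by (simp add: free_mod_iff finite_subset)
      have eq: "\<alpha> = fadd (amul (\<alpha> t) (dgen t)) \<alpha>'" unfolding \<alpha>'_def by (rule split_point)
      have fa: "amul (\<alpha> t) (dgen t) \<in> free_mod" by (simp add: amul_free dgen_free)
      have d: "W (fadd (amul (\<alpha> t) (dgen t)) \<alpha>') bs
          = \<alpha> t ^ 2 * W (dgen t) bs + W \<alpha>' bs + \<Phi> (amul (\<alpha> t) (dgen t) # \<alpha>' # bs)"
        if W: "C_LR scale k \<Phi> W" for W :: "('a \<Rightarrow> 'a) \<Rightarrow> ('a \<Rightarrow> 'a) list \<Rightarrow> 'a"
        using CLR_fadd[OF W fa f' ln sb] CLR_amul[OF W dgen_free ln sb] by simp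
      have "W1 \<alpha>' bs = W2 \<alpha>' bs" using insert.IH s' by blast
      then show "W1 \<alpha> bs = W2 \<alpha> bs"
        using d[OF W1] d[OF W2] gen[of t] eq by simp
    qed
  qed
  show ?thesis using main[of "fsupp \<alpha>"] a by (simp add: free_mod_iff)
qed



theorem mainTheorem14:
  fixes scale :: "'k::field \<Rightarrow> 'a::comm_ring_1 \<Rightarrow> 'a"
    and br :: "'a \<Rightarrow> 'a \<Rightarrow> 'a" and p2 :: "'a \<Rightarrow> 'a"
    and k :: nat
    and \<phi> :: "'a list \<Rightarrow> 'a" and \<omega> :: "'a \<Rightarrow> 'a list \<Rightarrow> 'a"
    and \<Phi> :: "('a \<Rightarrow> 'a) list \<Rightarrow> 'a"
  assumes char2: "CHAR('k) = 2"
    and rpa: "restricted_poisson scale br p2"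
    and k2: "k \<ge> 2"
    and cpa: "C_PA scale k \<phi> \<omega>"
    and Phi: "lr_phi scale k \<Phi>"
    and Phi_d: "\<And>us. length us = k \<Longrightarrow> \<Phi> (map dgen us) = \<phi> us"
  shows "\<exists>W. (C_LR scale k \<Phi> W \<and>
              (\<forall>u vs. length vs = k - 2 \<longrightarrow> W (dgen u) (map dgen vs) = \<omega> u vs)) \<and>
            (\<forall>W'. C_LR scale k \<Phi> W' \<and>
                  (\<forall>u vs. length vs = k - 2 \<longrightarrow> W' (dgen u) (map dgen vs) = \<omega> u vs) \<longrightarrow>
                  (\<forall>\<alpha> bs. \<alpha> \<in> free_mod \<longrightarrow> length bs = k - 2 \<longrightarrow> set bs \<subseteq> free_mod \<longrightarrow>
                     W' \<alpha> bs = W \<alpha> bs))"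
proof -
  obtain lt :: "'a \<Rightarrow> 'a \<Rightarrow> bool" where
    lt: "(\<forall>u. \<not> lt u u) \<and> (\<forall>u v. u \<noteq> v \<longrightarrow> lt u v \<or> lt v u) \<and> (\<forall>u v. lt u v \<longrightarrow> \<not> lt v u)"
    using ex_lt[where 'a = 'a] by (elim exE)
  have ka: "unital_K_algebra scale"
    using rpa unfolding restricted_poisson_def by (elim conjE) assumption
  have S: "thm_setup scale k \<phi> \<omega> \<Phi> lt"
  proof (rule thm_setup.intro)
    show "CHAR('k) = 2" by (rule char2)
    show "unital_K_algebra scale" by (rule ka)
    show "k \<ge> 2" by (rule k2)
    show "C_PA scale k \<phi> \<omega>" by (rule cpa)
    show "lr_phi scale k \<Phi>" by (rule Phi)
    show "\<And>us. length us = k \<Longrightarrow> \<Phi> (map dgen us) = \<phi> us" by (rule Phi_d)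
    show "\<And>u. \<not> lt u u" using lt by blast
    show "\<And>u v. u \<noteq> v \<Longrightarrow> lt u v \<or> lt v u" using lt by blast
    show "\<And>u v. lt u v \<Longrightarrow> \<not> lt v u" using lt by blast
  qed
  interpret S: thm_setup scale k \<phi> \<omega> \<Phi> lt by (rule S)
  have E1: "C_LR scale k \<Phi> S.Wc" by (rule S.Wc_CLR)
  have E2: "\<forall>u vs. length vs = k - 2 \<longrightarrow> S.Wc (dgen u) (map dgen vs) = \<omega> u vs"
    by (intro allI impI) (rule S.Wc_gen)
  have E3: "\<forall>W'. C_LR scale k \<Phi> W' \<and>
                  (\<forall>u vs. length vs = k - 2 \<longrightarrow> W' (dgen u) (map dgen vs) = \<omega> u vs) \<longrightarrow>
                  (\<forall>\<alpha> bs. \<alpha> \<in> free_mod \<longrightarrow> length bs = k - 2 \<longrightarrow> set bs \<subseteq> free_mod \<longrightarrow>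
                     W' \<alpha> bs = S.Wc \<alpha> bs)"
  proof (intro allI impI)
    fix W' :: "('a \<Rightarrow> 'a) \<Rightarrow> ('a \<Rightarrow> 'a) list \<Rightarrow> 'a" and \<alpha> :: "'a \<Rightarrow> 'a" and bs :: "('a \<Rightarrow> 'a) list"
    assume h: "C_LR scale k \<Phi> W' \<and> (\<forall>u vs. length vs = k - 2 \<longrightarrow> W' (dgen u) (map dgen vs) = \<omega> u vs)"
      and h2: "\<alpha> \<in> free_mod" "length bs = k - 2" "set bs \<subseteq> free_mod"
    have ag: "\<forall>u vs. length vs = k - 2 \<longrightarrow> W' (dgen u) (map dgen vs) = S.Wc (dgen u) (map dgen vs)"
      using h E2 by simp
    show "W' \<alpha> bs = S.Wc \<alpha> bs"
      by (rule CLR_unique[OF _ E1 ag h2]) (rule conjunct1[OF h])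
  qed
  show ?thesis by (rule exI[of _ S.Wc]) (intro conjI E1 E2 E3)
qed

end
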